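(* Let $r_1,r_2\in\mathbb{R}$, $A=(a_{ij})_{i,j=1,2}$ with $a_{ij}>0$, $A$ invertible, $(b_1,b_2)^T=A^{-1}(r_1,r_2)^T$ with $b_1,b_2>0$; assume $\langle Ax,x\rangle>0$ for all $x\in\mathbb{R}^2\setminus\{0\}$ and that $\begin{pmatrix}b_1a_{11}&b_1a_{12}\\ b_2a_{21}&b_2a_{22}\end{pmatrix}$ has two real eigenvalues $\mu_1,\mu_2>0$. Let $\tau>0$ with $\min\{2\pi/\mu_1,2\pi/\mu_2\}<\tau$ and suppose there are $n_1\neq n_2$ in $\mathbb{N}\cup\{0\}$ with $\frac{\pi}{2}+2n_i\pi<\mu_i\tau<\frac{\pi}{2}+2(n_i+1)\pi$ for $i=1,2$. Consider $$\dot x_1(t)=-\lambda\big(a_{11}x_1(t-\tau/\lambda)+a_{12}x_2(t-\tau/\lambda)\big)(b_1+x_1(t)),$$ $$\dot x_2(t)=-\lambda\big(a_{21}x_1(t-\tau/\lambda)+a_{22}x_2(t-\tau/\lambda)\big)(b_2+x_2(t)).\qquad(\mathrm{P})$$ Let $\lambda_1,\lambda_2\in\mathbb{R}^+$ with $\lambda_1<\lambda_2$. Then the origin is an isolated solution of (P): there exists $m_1>0$ such that if $((x_1,x_2),\lambda)\in\Theta_0\times[\lambda_1,\lambda_2]$ is a nontrivial solution of (P), then $(x_1,x_2)\notin\{(x_1,x_2)\in\Theta_0:\|x_1\|\le m_1,\ \|x_2\|\le m_1\}$.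
   Context: $\hat E$ denotes the Banach space of functions $x\in C([0,2\pi],\mathbb{R})$ with $\int_0^{2\pi}\dot x(t)^2\,dt<\infty$, $x(0)=x(2\pi)$ and $\int_0^{2\pi}x(t)\,dt=0$, with norm $\|x\|^2=\int_0^{2\pi}(\dot x(t)^2+x(t)^2)\,dt$; such functions are identified with their $2\pi$-periodic extensions to $\mathbb{R}$. $E=\hat E\times\hat E$ and $\Theta_0=\{(x_1,x_2)\in E: x_i(t)>-b_i\text{ for }t\in[0,2\pi],\ i=1,2\}$. A solution $((x_1,x_2),\lambda)$ of (P) is a pair $(x_1,x_2)\in E$ and $\lambda>0$ satisfying (P) for all $t$; nontrivial means $(x_1,x_2)\not\equiv 0$. *)

theory Defs
  imports "HOL-Analysis.Analysis"
begin

definition weak_deriv_L2 :: "(real \<Rightarrow> real) \<Rightarrow> (real \<Rightarrow> real) \<Rightarrow> bool" where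
  "weak_deriv_L2 x y \<longleftrightarrow>
     y integrable_on {0..2*pi} \<and> (\<lambda>t. (y t)^2) integrable_on {0..2*pi} \<and>
     (\<forall>t\<in>{0..2*pi}. x t = x 0 + integral {0..t} y)"

text \<open>The space E-hat (functions identified with their 2pi-periodic extensions to the reals).\<close>
definition E_hat :: "(real \<Rightarrow> real) set" where
  "E_hat = {x. continuous_on UNIV x \<and> (\<forall>t. x (t + 2*pi) = x t) \<and>
                (\<exists>y. weak_deriv_L2 x y) \<and> integral {0..2*pi} x = 0}"

definition Ehat_norm :: "(real \<Rightarrow> real) \<Rightarrow> real" where
  "Ehat_norm x = sqrt (integral {0..2*pi}
       (\<lambda>t. ((SOME y. weak_deriv_L2 x y) t)^2 + (x t)^2))"

definition Theta0 :: "real \<Rightarrow> real \<Rightarrow> ((real \<Rightarrow> real) \<times> (real \<Rightarrow> real)) set" where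
  "Theta0 b1 b2 = {(x1, x2). x1 \<in> E_hat \<and> x2 \<in> E_hat \<and>
       (\<forall>t\<in>{0..2*pi}. x1 t > - b1 \<and> x2 t > - b2)}"

definition is_solution_P ::
  "real \<Rightarrow> real \<Rightarrow> real \<Rightarrow> real \<Rightarrow> real \<Rightarrow> real \<Rightarrow> real \<Rightarrow>
   (real \<Rightarrow> real) \<Rightarrow> (real \<Rightarrow> real) \<Rightarrow> real \<Rightarrow> bool" where
  "is_solution_P a11 a12 a21 a22 b1 b2 \<tau> x1 x2 lam \<longleftrightarrow>
     x1 \<in> E_hat \<and> x2 \<in> E_hat \<and> lam > 0 \<and>
     (\<forall>t. (x1 has_real_derivative
            (- lam * (a11 * x1 (t - \<tau>/lam) + a12 * x2 (t - \<tau>/lam)) * (b1 + x1 t))) (at t)) \<and>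
     (\<forall>t. (x2 has_real_derivative
            (- lam * (a21 * x1 (t - \<tau>/lam) + a22 * x2 (t - \<tau>/lam)) * (b2 + x2 t))) (at t))"

definition eigenvalue2 :: "real \<Rightarrow> real \<Rightarrow> real \<Rightarrow> real \<Rightarrow> real \<Rightarrow> bool" where
  "eigenvalue2 m11 m12 m21 m22 \<mu> \<longleftrightarrow>
     (\<exists>v1 v2. (v1, v2) \<noteq> (0, 0) \<and> m11 * v1 + m12 * v2 = \<mu> * v1 \<and> m21 * v1 + m22 * v2 = \<mu> * v2)"

end

theory Submission
  imports Defs
begin


lemma cis_vd: "((\<lambda>t. cis (c * t)) has_vector_derivative (\<i> * of_real c * cis (c*t))) (at t within S)"
proof -
  have "((\<lambda>t. exp (t *\<^sub>R (\<i> * of_real c))) has_vector_derivative exp (t *\<^sub>R (\<i> * of_real c)) * (\<i> * of_real c)) (at t within S)"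
    by (rule exp_scaleR_has_vector_derivative_right)
  moreover have "\<And>t. exp (t *\<^sub>R (\<i> * of_real c)) = cis (c*t)"
    by (simp add: cis_conv_exp scaleR_conv_of_real mult_ac)
  ultimately show ?thesis by (simp add: mult_ac)
qed

lemma cis_int_2pi: "cis (of_int m * (2*pi)) = 1"
  using cis_multiple_2pi[of "of_int m"] by (simp add: mult_ac)

lemma int_cis: "((\<lambda>t. cis (of_int m * t)) has_integral (if m = 0 then of_real (2*pi) else 0)) {0..2*pi}"
proof (cases "m = 0")
  case True
  then show ?thesis using has_integral_const_real[of "1::complex" 0 "2*pi"] by (simp add: scaleR_conv_of_real)
next
  case False
  have d: "\<And>x. x \<in> {0..2*pi} \<Longrightarrow> ((\<lambda>t. cis (of_int m * t)) has_vector_derivative (\<i> * of_real (of_int m) * cis (of_int m * x))) (at x within {0..2*pi})"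
    by (rule cis_vd)
  have "((\<lambda>t. \<i> * of_real (of_int m) * cis (of_int m * t)) has_integral (cis (of_int m * (2*pi)) - cis (of_int m * 0))) {0..2*pi}"
    by (rule fundamental_theorem_of_calculus[OF _ d]) simp_all
  then have "((\<lambda>t. \<i> * of_real (of_int m) * cis (of_int m * t)) has_integral 0) {0..2*pi}"
    by (simp add: cis_int_2pi)
  from has_integral_mult_right[OF this, of "1 / (\<i> * of_real (of_int m))"] False show ?thesis by simp
qed

lemma periodic_int:
  assumes "\<And>t. f (t + 2*pi) = f t"
  shows "f (t + 2*pi* of_int n) = f t"
proof -
  have A: "f (t + 2*pi* of_nat m) = f t" for t m
  proof (induction m)
    case (Suc m)
    have "t + 2*pi* of_nat (Suc m) = (t + 2*pi* of_nat m) + 2*pi" by (simp add: algebra_simps)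
    then have "f (t + 2*pi* of_nat (Suc m)) = f ((t + 2*pi* of_nat m) + 2*pi)" by (rule arg_cong)
    also have "\<dots> = f (t + 2*pi* of_nat m)" by (rule assms)
    finally show ?case using Suc by simp
  qed simp
  show ?thesis
  proof (cases "n \<ge> 0")
    case True
    have "n = int (nat n)" using True by simp
    then show ?thesis using A[of t "nat n"] by (metis of_int_of_nat_eq)
  next
    case False
    define m where "m = nat (-n)"
    have "n = - int m" using False by (simp add: m_def)
    then show ?thesis using A[of "t - 2*pi* of_nat m" m] by simp
  qed
qed

lemma periodic_reduce:
  assumes "\<And>t. f (t + 2*pi) = f t"
  shows "\<exists>t0 \<in> {0..<2*pi}. f t = f t0"
proof -
  define n where "n = floor (t / (2*pi))"
  define t0 where "t0 = t - 2*pi* of_int n"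
  have "of_int n \<le> t / (2*pi)" "t / (2*pi) < of_int n + 1" unfolding n_def by linarith+
  then have "2*pi* of_int n \<le> t" "t < 2*pi*(of_int n + 1)"
    by (simp_all add: field_simps)
  then have "t0 \<in> {0..<2*pi}" unfolding t0_def by (auto simp: algebra_simps)
  moreover have "f t = f t0" using periodic_int[of f t0 n, OF assms] unfolding t0_def by simp
  ultimately show ?thesis by blast
qed

lemma integral_periodic_shift:
  fixes F :: "real \<Rightarrow> 'a::euclidean_space"
  assumes cont: "continuous_on UNIV F" and per: "\<And>t. F (t + 2*pi) = F t"
  shows "integral {0..2*pi} (\<lambda>t. F (t + c)) = integral {0..2*pi} F"
proof -
  define n where "n = floor (c / (2*pi))"
  define c0 where "c0 = c - 2*pi * of_int n"
  have "of_int n \<le> c / (2*pi)" "c / (2*pi) < of_int n + 1" unfolding n_def by linarith+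
  then have "2*pi * of_int n \<le> c" "c < 2*pi*(of_int n + 1)"
    by (simp_all add: field_simps)
  then have c0: "0 \<le> c0" "c0 \<le> 2*pi" unfolding c0_def by (auto simp: algebra_simps)
  have e1: "F (t + c) = F (t + c0)" for t
    using periodic_int[of F "t + c0" n, OF per] unfolding c0_def by (simp add: algebra_simps)
  have int: "F integrable_on {a..b}" for a b
    by (rule integrable_continuous_interval) (rule continuous_on_subset[OF cont], simp)
  have f1: "(\<lambda>t. F (t + c)) = F \<circ> (+) c0"
  proof
    fix t show "F (t + c) = (F \<circ> (+) c0) t" using e1[of t] by (simp add: add.commute)
  qed
  have f2: "F \<circ> (+) (2*pi) = F"
  proof
    fix t show "(F \<circ> (+) (2*pi)) t = F t" using per[of t] by (simp add: add.commute)
  qed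
  have "integral {0..2*pi} (\<lambda>t. F (t + c)) = integral {0..2*pi} (F \<circ> (+) c0)"
    using f1 by simp
  also have "\<dots> = integral {0+c0..2*pi+c0} F"
    by (rule integral_shift_Icc_real)
  also have "\<dots> = integral {c0..2*pi} F + integral {2*pi..2*pi + c0} F"
    using Henstock_Kurzweil_Integration.integral_combine[where f=F and a=c0 and c="2*pi" and b="2*pi + c0"] c0 int by simp
  also have "integral {2*pi..2*pi + c0} F = integral {0 + 2*pi..c0 + 2*pi} F"
    by (simp add: add.commute)
  also have "\<dots> = integral {0..c0} (F \<circ> (+) (2*pi))"
    by (rule integral_shift_Icc_real[symmetric])
  also have "\<dots> = integral {0..c0} F"
    using f2 by simp
  also have "integral {c0..2*pi} F + integral {0..c0} F = integral {0..2*pi} F"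
    using Henstock_Kurzweil_Integration.integral_combine[where f=F and a=0 and c=c0 and b="2*pi"] c0 int by (simp add: add.commute)
  finally show ?thesis .
qed




definition cf :: "(real \<Rightarrow> real) \<Rightarrow> int \<Rightarrow> complex" where
  "cf f k = integral {0..2*pi} (\<lambda>t. of_real (f t) * cis (- (of_int k * t)))"

lemma cont_sub: "continuous_on UNIV w \<Longrightarrow> continuous_on S w"
  by (rule continuous_on_subset) auto

lemma cont_shift: "continuous_on UNIV (w :: real \<Rightarrow> 'b::topological_space) \<Longrightarrow> continuous_on S (\<lambda>t. w (t + c))"
  by (rule continuous_on_compose2[of UNIV w]) (auto intro!: continuous_on_add[OF continuous_on_id continuous_on_const])

lemma cont_cis: "continuous_on S (\<lambda>t. cis (c * t))"
  unfolding cis_conv_exp by (auto intro!: continuous_intros)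

lemma cf_has_integral:
  assumes "continuous_on UNIV f"
  shows "((\<lambda>t. of_real (f t) * cis (- (of_int k * t))) has_integral cf f k) {0..2*pi}"
proof -
  have "continuous_on {0..2*pi} (\<lambda>t. of_real (f t) * cis ((- of_int k) * t))"
    by (intro continuous_intros cont_cis cont_sub[OF assms])
  then show ?thesis unfolding cf_def
    by (intro integrable_integral integrable_continuous_interval) simp
qed

lemma coef_ode:
  assumes cw: "continuous_on UNIV w" and cg: "continuous_on UNIV g"
    and pw: "\<And>t. w (t + 2*pi) = w t"
    and der: "\<And>t. (w has_real_derivative (- a * w (t - s) + g t)) (at t)"
  shows "(\<i> * of_int k + of_real a * cis (- (of_int k * s))) * cf w k = cf g k"
proof -
  define E where "E t = cis (- (of_int k * t))" for t
  define G where "G u = of_real (w u) * E u" for u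
  have Eder: "(E has_vector_derivative (\<i> * of_real (- of_int k) * E t)) (at t within S)" for t S
    using cis_vd[of "- of_int k" t S] unfolding E_def by simp
  have wder: "((\<lambda>t. complex_of_real (w t)) has_vector_derivative of_real (- a * w (t - s) + g t)) (at t within S)" for t S
    by (rule has_vector_derivative_of_real) (rule has_field_derivative_at_within[OF der])
  have Gder: "(G has_vector_derivative (of_real (w t) * (\<i> * of_real (- of_int k) * E t) + of_real (- a * w (t - s) + g t) * E t)) (at t within S)" for t S
    unfolding G_def by (rule has_vector_derivative_mult[OF wder Eder])
  have I0: "((\<lambda>t. of_real (w t) * (\<i> * of_real (- of_int k) * E t) + of_real (- a * w (t - s) + g t) * E t) has_integral (G (2*pi) - G 0)) {0..2*pi}"
    by (rule fundamental_theorem_of_calculus) (simp, rule Gder)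
  have E2: "E (2*pi) = 1" unfolding E_def using cis_int_2pi[of "-k"] by simp
  have "G (2*pi) = G 0"
    using pw[of 0] E2 by (simp add: G_def E_def)
  with I0 have I0': "((\<lambda>t. of_real (w t) * (\<i> * of_real (- of_int k) * E t) + of_real (- a * w (t - s) + g t) * E t) has_integral 0) {0..2*pi}"
    by simp
  have h3: "((\<lambda>t. of_real (w t) * E t) has_integral cf w k) {0..2*pi}"
    unfolding E_def by (rule cf_has_integral[OF cw])
  have h2: "((\<lambda>t. of_real (g t) * E t) has_integral cf g k) {0..2*pi}"
    unfolding E_def by (rule cf_has_integral[OF cg])
  have Gper: "G (u + 2*pi) = G u" for u
  proof -
    have "E (u + 2*pi) = E u * E (2*pi)" unfolding E_def by (simp add: cis_mult algebra_simps)
    then show ?thesis using pw[of u] E2 by (simp add: G_def)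
  qed
  have Gc: "continuous_on UNIV G"
    unfolding G_def E_def
    by (intro continuous_intros cont_sub[OF cw])
  have "integral {0..2*pi} (\<lambda>t. G (t + (- s))) = integral {0..2*pi} G"
    by (rule integral_periodic_shift[OF Gc Gper])
  moreover have "integral {0..2*pi} G = cf w k"
  proof -
    have "G = (\<lambda>t. of_real (w t) * E t)" by (rule ext) (simp add: G_def)
    then show ?thesis using h3 by (simp add: integral_unique)
  qed
  moreover have "(\<lambda>t. G (t + (- s))) integrable_on {0..2*pi}"
    by (rule integrable_continuous_interval) (rule cont_shift[OF Gc])
  ultimately have "((\<lambda>t. G (t + (- s))) has_integral cf w k) {0..2*pi}"
    by (metis integrable_integral)
  from has_integral_mult_right[OF this, of "E s"]
  have h1: "((\<lambda>t. E s * G (t - s)) has_integral (E s * cf w k)) {0..2*pi}" by simp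
  have eqf: "of_real (w t) * (\<i> * of_real (- of_int k) * E t) + of_real (- a * w (t - s) + g t) * E t
     = (- \<i> * of_int k) * (of_real (w t) * E t) + (- of_real a) * (E s * G (t - s)) + of_real (g t) * E t" for t
  proof -
    have "E t = E (t - s) * E s" unfolding E_def by (simp add: cis_mult algebra_simps)
    then show ?thesis by (simp add: G_def algebra_simps)
  qed
  have "((\<lambda>t. (- \<i> * of_int k) * (of_real (w t) * E t) + (- of_real a) * (E s * G (t - s)) + of_real (g t) * E t)
     has_integral ((- \<i> * of_int k) * cf w k + (- of_real a) * (E s * cf w k) + cf g k)) {0..2*pi}"
    by (intro has_integral_add has_integral_mult_right h1 h2 h3)
  then have "((\<lambda>t. of_real (w t) * (\<i> * of_real (- of_int k) * E t) + of_real (- a * w (t - s) + g t) * E t)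
     has_integral ((- \<i> * of_int k) * cf w k + (- of_real a) * (E s * cf w k) + cf g k)) {0..2*pi}"
    by (simp only: eqf)
  then have "(- \<i> * of_int k) * cf w k + (- of_real a) * (E s * cf w k) + cf g k = 0"
    by (rule has_integral_unique[OF _ I0'])
  then show ?thesis unfolding E_def by (simp add: algebra_simps)
qed




definition tp :: "int set \<Rightarrow> (int \<Rightarrow> complex) \<Rightarrow> real \<Rightarrow> complex" where
  "tp K d t = (\<Sum>k\<in>K. d k * cis (of_int k * t))"

lemma sq_has_integral:
  fixes f :: "real \<Rightarrow> real"
  assumes "continuous_on UNIV f"
  shows "((\<lambda>t. (f t)^2) has_integral integral {0..2*pi} (\<lambda>t. (f t)^2)) {0..2*pi}"
proof -
  have "continuous_on {0..2*pi} (\<lambda>t. (f t)^2)" by (intro continuous_intros cont_sub[OF assms])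
  then show ?thesis by (intro integrable_integral integrable_continuous_interval)
qed

lemma expansion:
  fixes f :: "real \<Rightarrow> real"
  assumes cf: "continuous_on UNIV f" and K: "finite K"
  shows "((\<lambda>t. (cmod (of_real (f t) - tp K d t))^2) has_integral
     (integral {0..2*pi} (\<lambda>t. (f t)^2) - 2 * Re (\<Sum>k\<in>K. cnj (d k) * cf f k) + 2*pi * (\<Sum>k\<in>K. (cmod (d k))^2))) {0..2*pi}"
proof -
  define F where "F t = complex_of_real (f t)" for t
  define Q where "Q t = tp K d t" for t
  have pw: "(cmod (of_real (f t) - tp K d t))^2 = (f t)^2 - 2 * Re (F t * cnj (Q t)) + Re (Q t * cnj (Q t))" for t
  proof -
    have "complex_of_real ((cmod (F t - Q t))^2) = (F t - Q t) * cnj (F t - Q t)"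
      by (rule complex_norm_square)
    also have "\<dots> = F t * F t - F t * cnj (Q t) - Q t * F t + Q t * cnj (Q t)"
      by (simp add: F_def algebra_simps)
    finally have "(cmod (F t - Q t))^2 = Re (F t * F t - F t * cnj (Q t) - Q t * F t + Q t * cnj (Q t))"
      by (metis Re_complex_of_real)
    moreover have "Re (Q t * F t) = Re (F t * cnj (Q t))" by (simp add: F_def)
    moreover have "Re (F t * F t) = (f t)^2" by (simp add: F_def power2_eq_square)
    ultimately show ?thesis by (simp add: F_def Q_def)
  qed
  have FQ: "F t * cnj (Q t) = (\<Sum>k\<in>K. cnj (d k) * (of_real (f t) * cis (- (of_int k * t))))" for t
    by (simp add: F_def Q_def tp_def cis_cnj sum_distrib_left algebra_simps)
  have QQ: "Q t * cnj (Q t) = (\<Sum>k\<in>K. \<Sum>l\<in>K. (d k * cnj (d l)) * cis (of_int (k - l) * t))" for t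
  proof -
    have "Q t * cnj (Q t) = (\<Sum>k\<in>K. d k * cis (of_int k * t)) * (\<Sum>l\<in>K. cnj (d l) * cis (- (of_int l * t)))"
      by (simp add: Q_def tp_def cis_cnj)
    also have "\<dots> = (\<Sum>k\<in>K. \<Sum>l\<in>K. (d k * cis (of_int k * t)) * (cnj (d l) * cis (- (of_int l * t))))"
      by (rule sum_product)
    also have "\<dots> = (\<Sum>k\<in>K. \<Sum>l\<in>K. (d k * cnj (d l)) * cis (of_int (k - l) * t))"
    proof (intro sum.cong refl)
      fix k l
      have "cis (of_int k * t) * cis (- (of_int l * t)) = cis (of_int (k - l) * t)"
        by (simp add: cis_mult algebra_simps)
      then show "(d k * cis (of_int k * t)) * (cnj (d l) * cis (- (of_int l * t))) = (d k * cnj (d l)) * cis (of_int (k - l) * t)"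
        by (metis mult.assoc mult.left_commute)
    qed
    finally show ?thesis .
  qed
  have hFQ: "((\<lambda>t. F t * cnj (Q t)) has_integral (\<Sum>k\<in>K. cnj (d k) * cf f k)) {0..2*pi}"
    unfolding FQ
    by (intro has_integral_sum K has_integral_mult_right cf_has_integral[OF cf])
  have inner: "(\<Sum>l\<in>K. (d k * cnj (d l)) * (if k - l = 0 then of_real (2*pi) else 0)) = d k * cnj (d k) * of_real (2*pi)"
    if "k \<in> K" for k
  proof -
    have "(\<Sum>l\<in>K. (d k * cnj (d l)) * (if k - l = 0 then of_real (2*pi) else 0))
        = (\<Sum>l\<in>K. if l = k then d k * cnj (d l) * of_real (2*pi) else 0)"
      by (intro sum.cong refl) auto
    also have "\<dots> = d k * cnj (d k) * of_real (2*pi)"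
      using K that by (simp add: sum.delta')
    finally show ?thesis .
  qed
  have hQQ0: "((\<lambda>t. Q t * cnj (Q t)) has_integral (\<Sum>k\<in>K. \<Sum>l\<in>K. (d k * cnj (d l)) * (if k - l = 0 then of_real (2*pi) else 0))) {0..2*pi}"
    unfolding QQ
    by (intro has_integral_sum K has_integral_mult_right int_cis)
  have "(\<Sum>k\<in>K. \<Sum>l\<in>K. (d k * cnj (d l)) * (if k - l = 0 then of_real (2*pi) else 0)) = (\<Sum>k\<in>K. d k * cnj (d k) * of_real (2*pi))"
    using inner by (rule sum.cong[OF refl])
  also have "\<dots> = (\<Sum>k\<in>K. of_real (2*pi * (cmod (d k))^2))"
  proof (intro sum.cong refl)
    fix k show "d k * cnj (d k) * of_real (2*pi) = of_real (2*pi * (cmod (d k))^2)"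
      by (simp only: complex_norm_square[symmetric] of_real_mult mult.commute)
  qed
  also have "\<dots> = of_real (2*pi * (\<Sum>k\<in>K. (cmod (d k))^2))"
    by (simp only: of_real_sum sum_distrib_left)
  finally have hQQ: "((\<lambda>t. Q t * cnj (Q t)) has_integral of_real (2*pi * (\<Sum>k\<in>K. (cmod (d k))^2))) {0..2*pi}"
    using hQQ0 by simp
  have "((\<lambda>t. (f t)^2 - 2 * Re (F t * cnj (Q t)) + Re (Q t * cnj (Q t))) has_integral
     (integral {0..2*pi} (\<lambda>t. (f t)^2) - 2 * Re (\<Sum>k\<in>K. cnj (d k) * cf f k) + Re (of_real (2*pi * (\<Sum>k\<in>K. (cmod (d k))^2))))) {0..2*pi}"
    by (intro has_integral_add has_integral_diff has_integral_mult_right has_integral_Re hFQ hQQ sq_has_integral[OF cf])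
  then show ?thesis by (simp add: pw)
qed

lemma amgm2: "(p::real) > 0 \<Longrightarrow> 2 * (a*x + b*y) \<le> p * (a^2 + b^2) + (x^2 + y^2) / p"
proof -
  assume p: "p > 0"
  have "0 \<le> (p*a - x)^2 + (p*b - y)^2" by simp
  then have "2 * p * (a*x + b*y) \<le> p * (p * (a^2 + b^2)) + (x^2 + y^2)"
    by (simp add: power2_eq_square algebra_simps)
  then have "2 * (a*x + b*y) \<le> (p * (p * (a^2 + b^2)) + (x^2 + y^2)) / p"
    using p by (simp add: field_simps)
  also have "\<dots> = p * (a^2 + b^2) + (x^2 + y^2) / p" using p by (simp add: field_simps)
  finally show ?thesis .
qed

lemma re_cnj_le: "(p::real) > 0 \<Longrightarrow> 2 * Re (cnj d * c) \<le> p * (cmod d)^2 + (cmod c)^2 / p"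
  using amgm2[of p "Re d" "Re c" "Im d" "Im c"] by (simp add: cmod_power2)

lemma expansion_lower:
  fixes f :: "real \<Rightarrow> real"
  assumes cf: "continuous_on UNIV f" and K: "finite K"
  shows "integral {0..2*pi} (\<lambda>t. (f t)^2) - (\<Sum>k\<in>K. (cmod (cf f k))^2) / (2*pi)
     \<le> integral {0..2*pi} (\<lambda>t. (f t)^2) - 2 * Re (\<Sum>k\<in>K. cnj (d k) * cf f k) + 2*pi * (\<Sum>k\<in>K. (cmod (d k))^2)"
proof -
  have "2 * Re (\<Sum>k\<in>K. cnj (d k) * cf f k) = (\<Sum>k\<in>K. 2 * Re (cnj (d k) * cf f k))"
    by (simp add: sum_distrib_left)
  also have "\<dots> \<le> (\<Sum>k\<in>K. 2*pi * (cmod (d k))^2 + (cmod (cf f k))^2 / (2*pi))"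
    by (intro sum_mono re_cnj_le) simp
  also have "\<dots> = 2*pi * (\<Sum>k\<in>K. (cmod (d k))^2) + (\<Sum>k\<in>K. (cmod (cf f k))^2) / (2*pi)"
    by (simp add: sum.distrib sum_distrib_left sum_divide_distrib)
  finally show ?thesis by simp
qed

lemma bessel:
  fixes f :: "real \<Rightarrow> real"
  assumes cf: "continuous_on UNIV f" and K: "finite K"
  shows "(\<Sum>k\<in>K. (cmod (cf f k))^2) \<le> 2*pi * integral {0..2*pi} (\<lambda>t. (f t)^2)"
proof -
  define d where "d k = cf f k / of_real (2*pi)" for k
  have V: "0 \<le> integral {0..2*pi} (\<lambda>t. (f t)^2) - 2 * Re (\<Sum>k\<in>K. cnj (d k) * cf f k) + 2*pi * (\<Sum>k\<in>K. (cmod (d k))^2)"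
    by (rule has_integral_nonneg[OF expansion[OF cf K]]) simp
  have t1: "Re (cnj (d k) * cf f k) = (cmod (cf f k))^2 / (2*pi)" for k
  proof -
    have "cnj (d k) * cf f k = (cf f k * cnj (cf f k)) / of_real (2*pi)"
      by (simp add: d_def)
    also have "\<dots> = of_real ((cmod (cf f k))^2 / (2*pi))"
      by (simp only: complex_norm_square[symmetric] of_real_divide)
    finally show ?thesis by simp
  qed
  have t2: "2*pi * (cmod (d k))^2 = (cmod (cf f k))^2 / (2*pi)" for k
    by (simp add: d_def norm_divide power2_eq_square)
  have "Re (\<Sum>k\<in>K. cnj (d k) * cf f k) = (\<Sum>k\<in>K. (cmod (cf f k))^2) / (2*pi)"
    by (simp only: Re_sum t1 sum_divide_distrib)
  then have "2 * Re (\<Sum>k\<in>K. cnj (d k) * cf f k) = 2 * (\<Sum>k\<in>K. (cmod (cf f k))^2) / (2*pi)"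
    by simp
  moreover have "2*pi * (\<Sum>k\<in>K. (cmod (d k))^2) = (\<Sum>k\<in>K. (cmod (cf f k))^2) / (2*pi)"
    by (simp add: sum_distrib_left t2 sum_divide_distrib)
  ultimately have "0 \<le> integral {0..2*pi} (\<lambda>t. (f t)^2) - (\<Sum>k\<in>K. (cmod (cf f k))^2) / (2*pi)"
    using V by simp
  then show ?thesis by (simp add: field_simps)
qed




lemma angle_periodic:
  assumes pw: "\<And>t. w (t + 2*pi) = w t"
    and a: "exp (\<i> * of_real a) = exp (\<i> * of_real b)"
  shows "w a = w b"
proof -
  obtain n :: int where "\<i> * of_real a = \<i> * of_real b + (of_int (2 * n) * pi) * \<i>"
    using a exp_eq by blast
  then have "Im (\<i> * of_real a) = Im (\<i> * of_real b + (of_int (2 * n) * pi) * \<i>)" by simp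
  then have "a = b + 2 * pi * of_int n" by simp
  then show ?thesis using periodic_int[of w b n, OF pw] by simp
qed

lemma W_eq:
  assumes pw: "\<And>t. w (t + 2*pi) = w t"
  shows "w (Arg z) = w (Arg2pi z)"
proof (cases "z = 0")
  case True then show ?thesis by (simp add: Arg_zero)
next
  case False
  have "is_Arg z (Arg z)" by (rule is_Arg_Arg[OF False])
  moreover have "is_Arg z (Arg2pi z)" using Arg2pi by blast
  ultimately have "of_real (norm z) * exp (\<i> * of_real (Arg z)) = of_real (norm z) * exp (\<i> * of_real (Arg2pi z))"
    unfolding is_Arg_def by metis
  then have "exp (\<i> * of_real (Arg z)) = exp (\<i> * of_real (Arg2pi z))"
    using False by simp
  then show ?thesis by (rule angle_periodic[of w, OF pw])
qed

lemma W_cis: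
  assumes pw: "\<And>t. w (t + 2*pi) = w t"
  shows "w (Arg (cis t)) = w t"
proof -
  have "cis (Arg (cis t)) = sgn (cis t)" by (rule cis_Arg) simp
  also have "\<dots> = cis t" by (simp add: sgn_div_norm)
  finally have "exp (\<i> * of_real (Arg (cis t))) = exp (\<i> * of_real t)" by (simp add: cis_conv_exp)
  then show ?thesis by (rule angle_periodic[of w, OF pw])
qed

lemma W_cont:
  assumes cw: "continuous_on UNIV w" and pw: "\<And>t. w (t + 2*pi) = w t"
  shows "continuous_on (sphere 0 1) (\<lambda>z. w (Arg z))"
proof (rule continuous_at_imp_continuous_on, rule ballI)
  fix z :: complex assume z: "z \<in> sphere 0 1"
  then have z0: "z \<noteq> 0" by auto
  have wc: "isCont w x" for x using cw by (simp add: continuous_on_eq_continuous_at)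
  show "isCont (\<lambda>z. w (Arg z)) z"
  proof (cases "z \<in> \<real>\<^sub>\<le>\<^sub>0")
    case False
    then show ?thesis by (intro isCont_o2[OF continuous_at_Arg[OF False] wc])
  next
    case True
    then have "z \<notin> \<real>\<^sub>\<ge>\<^sub>0" using z0 by (auto simp: nonpos_Reals_def nonneg_Reals_def)
    then have "isCont (\<lambda>z. w (Arg2pi z)) z" by (intro isCont_o2[OF continuous_at_Arg2pi wc])
    moreover have "(\<lambda>z. w (Arg2pi z)) = (\<lambda>z. w (Arg z))" using W_eq[of w, OF pw] by (simp add: fun_eq_iff)
    ultimately show ?thesis by simp
  qed
qed

definition trigpoly :: "(real \<Rightarrow> complex) \<Rightarrow> bool" where
  "trigpoly h \<longleftrightarrow> (\<exists>K d. finite K \<and> (\<forall>t. h t = tp K d t))"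

lemma trigpoly_const: "trigpoly (\<lambda>t. c)"
  unfolding trigpoly_def tp_def by (rule exI[of _ "{0}"], rule exI[of _ "\<lambda>_. c"]) simp

lemma sum_restrict_Un:
  assumes "finite A" "finite B"
  shows "(\<Sum>k\<in>A \<union> B. if k \<in> A then h k else 0) = sum h A"
proof -
  have "(A \<union> B) \<inter> A = A" by auto
  then show ?thesis using sum.inter_restrict[of "A \<union> B" h A] assms by simp
qed

lemma trigpoly_add:
  assumes "trigpoly f" "trigpoly g" shows "trigpoly (\<lambda>t. f t + g t)"
proof -
  obtain K1 d1 where K1: "finite K1" "\<And>t. f t = tp K1 d1 t" using assms(1) unfolding trigpoly_def by blast
  obtain K2 d2 where K2: "finite K2" "\<And>t. g t = tp K2 d2 t" using assms(2) unfolding trigpoly_def by blast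
  define d where "d k = (if k \<in> K1 then d1 k else 0) + (if k \<in> K2 then d2 k else 0)" for k
  have "f t + g t = tp (K1 \<union> K2) d t" for t
  proof -
    have "tp (K1 \<union> K2) d t = (\<Sum>k\<in>K1 \<union> K2. (if k \<in> K1 then d1 k * cis (of_int k * t) else 0))
        + (\<Sum>k\<in>K1 \<union> K2. (if k \<in> K2 then d2 k * cis (of_int k * t) else 0))"
      unfolding tp_def d_def sum.distrib[symmetric] by (intro sum.cong refl) (simp add: distrib_right)
    also have "\<dots> = tp K1 d1 t + tp K2 d2 t"
      unfolding tp_def
      using sum_restrict_Un[OF K1(1) K2(1), of "\<lambda>k. d1 k * cis (of_int k * t)"]
        sum_restrict_Un[OF K2(1) K1(1), of "\<lambda>k. d2 k * cis (of_int k * t)", unfolded Un_commute[of K2 K1]]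
      by simp
    finally show ?thesis using K1 K2 by simp
  qed
  then show ?thesis unfolding trigpoly_def using K1 K2 by blast
qed

lemma trigpoly_mult:
  assumes "trigpoly f" "trigpoly g" shows "trigpoly (\<lambda>t. f t * g t)"
proof -
  obtain K1 d1 where K1: "finite K1" "\<And>t. f t = tp K1 d1 t" using assms(1) unfolding trigpoly_def by blast
  obtain K2 d2 where K2: "finite K2" "\<And>t. g t = tp K2 d2 t" using assms(2) unfolding trigpoly_def by blast
  define S where "S = K1 \<times> K2"
  define gm where "gm p = fst p + snd p" for p :: "int \<times> int"
  define c where "c p = d1 (fst p) * d2 (snd p)" for p
  define T where "T = gm ` S"
  define d where "d y = (\<Sum>p\<in>{p. p \<in> S \<and> gm p = y}. c p)" for y
  have fS: "finite S" using K1 K2 by (simp add: S_def)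
  have fT: "finite T" using fS by (simp add: T_def)
  have "f t * g t = tp T d t" for t
  proof -
    have "f t * g t = (\<Sum>k\<in>K1. \<Sum>l\<in>K2. (d1 k * cis (of_int k * t)) * (d2 l * cis (of_int l * t)))"
      by (simp add: K1 K2 tp_def sum_product)
    also have "\<dots> = (\<Sum>p\<in>S. c p * cis (of_int (gm p) * t))"
      unfolding S_def sum.cartesian_product
      by (intro sum.cong refl) (auto simp: c_def gm_def cis_mult algebra_simps)
    also have "\<dots> = (\<Sum>y\<in>T. \<Sum>p\<in>{p. p \<in> S \<and> gm p = y}. c p * cis (of_int (gm p) * t))"
      by (rule sum.group[symmetric, OF fS fT]) (simp add: T_def)
    also have "\<dots> = (\<Sum>y\<in>T. d y * cis (of_int y * t))"
    proof (intro sum.cong refl)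
      fix y
      have "(\<Sum>p\<in>{p. p \<in> S \<and> gm p = y}. c p * cis (of_int (gm p) * t)) = (\<Sum>p\<in>{p. p \<in> S \<and> gm p = y}. c p * cis (of_int y * t))"
        by (intro sum.cong refl) auto
      also have "\<dots> = d y * cis (of_int y * t)" by (simp add: d_def sum_distrib_right)
      finally show "(\<Sum>p\<in>{p. p \<in> S \<and> gm p = y}. c p * cis (of_int (gm p) * t)) = d y * cis (of_int y * t)" .
    qed
    finally show ?thesis by (simp add: tp_def)
  qed
  then show ?thesis unfolding trigpoly_def using fT by blast
qed

lemma trigpoly_linear:
  assumes "bounded_linear g"
  shows "trigpoly (\<lambda>t. complex_of_real (g (cis t)))"
proof -
  interpret g: bounded_linear g by (rule assms)
  have lin: "g (cis t) = cos t * g 1 + sin t * g \<i>" for t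
  proof -
    have "cis t = cos t *\<^sub>R 1 + sin t *\<^sub>R \<i>" by (simp add: complex_eq_iff)
    then have "g (cis t) = g (cos t *\<^sub>R 1) + g (sin t *\<^sub>R \<i>)"
      using g.add by metis
    also have "\<dots> = cos t * g 1 + sin t * g \<i>"
      using g.scaleR by simp
    finally show ?thesis .
  qed
  define d where "d k = (if k = 1 then (of_real (g 1) - \<i> * of_real (g \<i>)) / 2 else (of_real (g 1) + \<i> * of_real (g \<i>)) / 2)" for k :: int
  have "complex_of_real (g (cis t)) = tp {1, -1} d t" for t
    unfolding lin tp_def d_def by (simp add: complex_eq_iff cis.sel field_simps)
  then show ?thesis unfolding trigpoly_def by (intro exI[of _ "{1,-1}"] exI[of _ d]) simp
qed

lemma trigpoly_poly:
  "real_polynomial_function g \<Longrightarrow> trigpoly (\<lambda>t. complex_of_real (g (cis t)))"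
proof (induction g rule: real_polynomial_function.induct)
  case (linear f) then show ?case by (rule trigpoly_linear)
next
  case (const c) then show ?case by (rule trigpoly_const)
next
  case (add f g) then show ?case using trigpoly_add[OF add.IH] by simp
next
  case (mult f g) then show ?case using trigpoly_mult[OF mult.IH] by simp
qed

lemma trig_approx:
  fixes w :: "real \<Rightarrow> real"
  assumes cw: "continuous_on UNIV w" and pw: "\<And>t. w (t + 2*pi) = w t" and e: "e > 0"
  shows "\<exists>K d. finite K \<and> (\<forall>t. cmod (of_real (w t) - tp K d t) \<le> e)"
proof -
  obtain g where g: "real_polynomial_function g" "\<And>z. z \<in> sphere 0 1 \<Longrightarrow> \<bar>w (Arg z) - g z\<bar> < e"
    using Stone_Weierstrass_real_polynomial_function[OF compact_sphere W_cont[OF cw pw] e] by blast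
  obtain K d where K: "finite K" "\<And>t. complex_of_real (g (cis t)) = tp K d t"
    using trigpoly_poly[OF g(1)] unfolding trigpoly_def by blast
  have "cmod (of_real (w t) - tp K d t) \<le> e" for t
  proof -
    have "of_real (w t) - tp K d t = complex_of_real (w (Arg (cis t)) - g (cis t))"
      using K(2)[of t, symmetric] W_cis[of w, OF pw, of t] by simp
    then have "cmod (of_real (w t) - tp K d t) = \<bar>w (Arg (cis t)) - g (cis t)\<bar>"
      by (simp only: norm_of_real)
    also have "\<dots> < e" by (rule g(2)) simp
    finally show ?thesis by simp
  qed
  then show ?thesis using K(1) by blast
qed




lemma scalar_key:
  fixes w g :: "real \<Rightarrow> real"
  assumes cw: "continuous_on UNIV w" and cg: "continuous_on UNIV g"
    and pw: "\<And>t. w (t + 2*pi) = w t"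
    and der: "\<And>t. (w has_real_derivative (- a * w (t - s) + g t)) (at t)"
    and dpos: "\<delta> > 0"
    and dl: "\<And>k::int. \<delta> \<le> cmod (\<i> * of_int k + of_real a * cis (- (of_int k * s)))"
  shows "integral {0..2*pi} (\<lambda>t. (w t)^2) \<le> integral {0..2*pi} (\<lambda>t. (g t)^2) / \<delta>^2"
proof (rule field_le_epsilon)
  fix e :: real assume e: "e > 0"
  define \<eta> where "\<eta> = sqrt (e / (2*pi))"
  have \<eta>: "\<eta> > 0" using e by (simp add: \<eta>_def)
  have \<eta>2: "2*pi * \<eta>^2 = e" using e by (simp add: \<eta>_def)
  obtain K d where K: "finite K" "\<And>t. cmod (of_real (w t) - tp K d t) \<le> \<eta>"
    using trig_approx[OF cw pw \<eta>] by blast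
  have hc: "((\<lambda>t. \<eta>^2) has_integral (2*pi*\<eta>^2)) {0..2*pi}"
    using has_integral_const_real[of "\<eta>^2" 0 "2*pi"] by simp
  have V: "integral {0..2*pi} (\<lambda>t. (w t)^2) - 2 * Re (\<Sum>k\<in>K. cnj (d k) * cf w k) + 2*pi * (\<Sum>k\<in>K. (cmod (d k))^2) \<le> e"
  proof -
    have "integral {0..2*pi} (\<lambda>t. (w t)^2) - 2 * Re (\<Sum>k\<in>K. cnj (d k) * cf w k) + 2*pi * (\<Sum>k\<in>K. (cmod (d k))^2)
       \<le> 2*pi * \<eta>^2"
    proof (rule has_integral_le[OF expansion[OF cw K(1)] hc])
      fix t show "(cmod (of_real (w t) - tp K d t))^2 \<le> \<eta>^2"
        using K(2)[of t] by (simp add: power_mono)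
    qed
    then show ?thesis using \<eta>2 by simp
  qed
  have low: "integral {0..2*pi} (\<lambda>t. (w t)^2) - (\<Sum>k\<in>K. (cmod (cf w k))^2) / (2*pi) \<le> e"
    using expansion_lower[OF cw K(1), of d] V by linarith
  have ck: "(cmod (cf w k))^2 \<le> (cmod (cf g k))^2 / \<delta>^2" for k
  proof -
    have eq: "(\<i> * of_int k + of_real a * cis (- (of_int k * s))) * cf w k = cf g k"
      by (rule coef_ode[OF cw cg pw der])
    have "\<delta> * cmod (cf w k) \<le> cmod (\<i> * of_int k + of_real a * cis (- (of_int k * s))) * cmod (cf w k)"
      by (rule mult_right_mono[OF dl]) simp
    also have "\<dots> = cmod (cf g k)" using eq by (metis norm_mult)
    finally have "\<delta> * cmod (cf w k) \<le> cmod (cf g k)" .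
    then have "(\<delta> * cmod (cf w k))^2 \<le> (cmod (cf g k))^2"
      using dpos by (intro power_mono) simp_all
    then show ?thesis using dpos by (simp add: field_simps power_mult_distrib)
  qed
  have "(\<Sum>k\<in>K. (cmod (cf w k))^2) \<le> (\<Sum>k\<in>K. (cmod (cf g k))^2 / \<delta>^2)"
    by (intro sum_mono ck)
  also have "\<dots> = (\<Sum>k\<in>K. (cmod (cf g k))^2) / \<delta>^2" by (simp add: sum_divide_distrib)
  also have "\<dots> \<le> 2*pi * integral {0..2*pi} (\<lambda>t. (g t)^2) / \<delta>^2"
    using bessel[OF cg K(1)] dpos by (simp add: divide_right_mono)
  finally have "(\<Sum>k\<in>K. (cmod (cf w k))^2) / (2*pi) \<le> integral {0..2*pi} (\<lambda>t. (g t)^2) / \<delta>^2"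
    by (simp add: field_simps)
  then show "integral {0..2*pi} (\<lambda>t. (w t)^2) \<le> integral {0..2*pi} (\<lambda>t. (g t)^2) / \<delta>^2 + e"
    using low by linarith
qed




lemma abs_lin2:
  fixes a b y1 y2 :: real
  shows "\<bar>a * y1 + b * y2\<bar> \<le> (\<bar>a\<bar> + \<bar>b\<bar>) * (\<bar>y1\<bar> + \<bar>y2\<bar>)"
proof -
  have "\<bar>a * y1 + b * y2\<bar> \<le> \<bar>a\<bar> * \<bar>y1\<bar> + \<bar>b\<bar> * \<bar>y2\<bar>"
    using abs_triangle_ineq[of "a*y1" "b*y2"] by (simp add: abs_mult)
  also have "\<dots> \<le> \<bar>a\<bar> * (\<bar>y1\<bar> + \<bar>y2\<bar>) + \<bar>b\<bar> * (\<bar>y1\<bar> + \<bar>y2\<bar>)"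
    by (intro add_mono mult_left_mono) auto
  also have "\<dots> = (\<bar>a\<bar> + \<bar>b\<bar>) * (\<bar>y1\<bar> + \<bar>y2\<bar>)" by (simp add: algebra_simps)
  finally show ?thesis .
qed

lemma ybound:
  fixes p1 q1 p2 q2 u1 u2 :: real
  assumes D: "p1 * q2 - p2 * q1 \<noteq> 0"
  shows "\<bar>u1\<bar> + \<bar>u2\<bar> \<le> (2 * (\<bar>p1\<bar> + \<bar>q1\<bar> + \<bar>p2\<bar> + \<bar>q2\<bar>) / \<bar>p1 * q2 - p2 * q1\<bar>)
            * (\<bar>p1 * u1 + q1 * u2\<bar> + \<bar>p2 * u1 + q2 * u2\<bar>)"
proof -
  define D where "D = p1 * q2 - p2 * q1"
  define W1 where "W1 = p1 * u1 + q1 * u2"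
  define W2 where "W2 = p2 * u1 + q2 * u2"
  define P where "P = \<bar>p1\<bar> + \<bar>q1\<bar> + \<bar>p2\<bar> + \<bar>q2\<bar>"
  have e1: "D * u1 = q2 * W1 + (- q1) * W2" unfolding D_def W1_def W2_def by (simp add: algebra_simps)
  have e2: "D * u2 = (- p2) * W1 + p1 * W2" unfolding D_def W1_def W2_def by (simp add: algebra_simps)
  have "\<bar>D\<bar> * \<bar>u1\<bar> = \<bar>q2 * W1 + (- q1) * W2\<bar>" by (simp only: abs_mult[symmetric] e1)
  also have "\<dots> \<le> (\<bar>q2\<bar> + \<bar>- q1\<bar>) * (\<bar>W1\<bar> + \<bar>W2\<bar>)"
    by (rule abs_lin2)
  also have "\<dots> \<le> P * (\<bar>W1\<bar> + \<bar>W2\<bar>)"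
    by (intro mult_right_mono) (auto simp: P_def)
  finally have b1: "\<bar>D\<bar> * \<bar>u1\<bar> \<le> P * (\<bar>W1\<bar> + \<bar>W2\<bar>)" .
  have "\<bar>D\<bar> * \<bar>u2\<bar> = \<bar>(- p2) * W1 + p1 * W2\<bar>" by (simp only: abs_mult[symmetric] e2)
  also have "\<dots> \<le> (\<bar>- p2\<bar> + \<bar>p1\<bar>) * (\<bar>W1\<bar> + \<bar>W2\<bar>)"
    by (rule abs_lin2)
  also have "\<dots> \<le> P * (\<bar>W1\<bar> + \<bar>W2\<bar>)"
    by (intro mult_right_mono) (auto simp: P_def)
  finally have b2: "\<bar>D\<bar> * \<bar>u2\<bar> \<le> P * (\<bar>W1\<bar> + \<bar>W2\<bar>)" .
  have Dp: "\<bar>D\<bar> > 0" using D by (simp add: D_def)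
  have "\<bar>D\<bar> * (\<bar>u1\<bar> + \<bar>u2\<bar>) \<le> 2 * P * (\<bar>W1\<bar> + \<bar>W2\<bar>)" using b1 b2 by (simp add: algebra_simps)
  then have "\<bar>u1\<bar> + \<bar>u2\<bar> \<le> 2 * P * (\<bar>W1\<bar> + \<bar>W2\<bar>) / \<bar>D\<bar>"
    using Dp by (simp add: field_simps)
  then show ?thesis by (simp add: D_def W1_def W2_def P_def)
qed

lemma gbound:
  fixes lam p q x1 x2 y1 y2 a11 a12 a21 a22 \<epsilon> P A Y :: real
  assumes x: "\<bar>x1\<bar> \<le> \<epsilon>" "\<bar>x2\<bar> \<le> \<epsilon>" and lam: "lam \<ge> 0"
    and P: "\<bar>p\<bar> + \<bar>q\<bar> \<le> P" and A: "A = \<bar>a11\<bar> + \<bar>a12\<bar> + \<bar>a21\<bar> + \<bar>a22\<bar>"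
  shows "\<bar>- lam * (p * x1 * (a11 * y1 + a12 * y2) + q * x2 * (a21 * y1 + a22 * y2))\<bar>
         \<le> lam * P * \<epsilon> * A * (\<bar>y1\<bar> + \<bar>y2\<bar>)"
proof -
  define Y where "Y = \<bar>y1\<bar> + \<bar>y2\<bar>"
  have Y0: "Y \<ge> 0" by (simp add: Y_def)
  have e0: "\<epsilon> \<ge> 0" using x by linarith
  have A1: "\<bar>a11 * y1 + a12 * y2\<bar> \<le> A * Y"
  proof -
    have "\<bar>a11 * y1 + a12 * y2\<bar> \<le> (\<bar>a11\<bar> + \<bar>a12\<bar>) * Y" unfolding Y_def by (rule abs_lin2)
    also have "\<dots> \<le> A * Y" using Y0 by (intro mult_right_mono) (auto simp: A)
    finally show ?thesis .
  qed
  have A2: "\<bar>a21 * y1 + a22 * y2\<bar> \<le> A * Y"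
  proof -
    have "\<bar>a21 * y1 + a22 * y2\<bar> \<le> (\<bar>a21\<bar> + \<bar>a22\<bar>) * Y" unfolding Y_def by (rule abs_lin2)
    also have "\<dots> \<le> A * Y" using Y0 by (intro mult_right_mono) (auto simp: A)
    finally show ?thesis .
  qed
  have t1: "\<bar>p * x1 * (a11 * y1 + a12 * y2)\<bar> \<le> \<bar>p\<bar> * (\<epsilon> * (A * Y))"
    unfolding abs_mult mult.assoc
    by (intro mult_left_mono mult_mono x A1) (auto simp: e0)
  have t2: "\<bar>q * x2 * (a21 * y1 + a22 * y2)\<bar> \<le> \<bar>q\<bar> * (\<epsilon> * (A * Y))"
    unfolding abs_mult mult.assoc
    by (intro mult_left_mono mult_mono x A2) (auto simp: e0)
  have "\<bar>p * x1 * (a11 * y1 + a12 * y2) + q * x2 * (a21 * y1 + a22 * y2)\<bar> \<le> (\<bar>p\<bar> + \<bar>q\<bar>) * (\<epsilon> * (A * Y))"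
    using abs_triangle_ineq[of "p * x1 * (a11 * y1 + a12 * y2)" "q * x2 * (a21 * y1 + a22 * y2)"] t1 t2
    by (simp add: algebra_simps)
  also have "\<dots> \<le> P * (\<epsilon> * (A * Y))"
    using P e0 Y0 by (intro mult_right_mono) (auto simp: A)
  finally have "lam * \<bar>p * x1 * (a11 * y1 + a12 * y2) + q * x2 * (a21 * y1 + a22 * y2)\<bar> \<le> lam * (P * (\<epsilon> * (A * Y)))"
    using lam by (intro mult_left_mono)
  then show ?thesis using lam by (simp add: abs_mult Y_def mult_ac)
qed

lemma sq_sum_le: "((x::real) * (\<bar>a\<bar> + \<bar>b\<bar>))^2 \<le> 2 * x^2 * (a^2 + b^2)"
proof -
  have h: "(\<bar>a\<bar> + \<bar>b\<bar>)^2 \<le> 2 * (a^2 + b^2)"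
    using sum_squares_ge_zero[of "\<bar>a\<bar> - \<bar>b\<bar>" 0] by (simp add: power2_eq_square algebra_simps)
  have "(x * (\<bar>a\<bar> + \<bar>b\<bar>))^2 = x^2 * (\<bar>a\<bar> + \<bar>b\<bar>)^2" by (simp only: power_mult_distrib)
  also have "\<dots> \<le> x^2 * (2 * (a^2 + b^2))" by (rule mult_left_mono[OF h]) simp
  also have "\<dots> = 2 * x^2 * (a^2 + b^2)" by (simp only: mult.assoc mult.left_commute)
  finally show ?thesis .
qed




lemma w_deriv:
  fixes x1 x2 :: "real \<Rightarrow> real"
  assumes der1: "\<And>t. (x1 has_real_derivative (- lam * (a11 * x1 (t - s) + a12 * x2 (t - s)) * (b1 + x1 t))) (at t)"
    and der2: "\<And>t. (x2 has_real_derivative (- lam * (a21 * x1 (t - s) + a22 * x2 (t - s)) * (b2 + x2 t))) (at t)"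
    and ev: "p * (b1 * a11) + q * (b2 * a21) = mu * p" "p * (b1 * a12) + q * (b2 * a22) = mu * q"
  shows "((\<lambda>t. p * x1 t + q * x2 t) has_real_derivative
     (- (lam * mu) * (p * x1 (t - s) + q * x2 (t - s)) +
      (- lam * (p * x1 t * (a11 * x1 (t - s) + a12 * x2 (t - s)) + q * x2 t * (a21 * x1 (t - s) + a22 * x2 (t - s)))))) (at t)"
proof -
  have d: "((\<lambda>t. p * x1 t + q * x2 t) has_real_derivative (p * (- lam * (a11 * x1 (t - s) + a12 * x2 (t - s)) * (b1 + x1 t)) + q * (- lam * (a21 * x1 (t - s) + a22 * x2 (t - s)) * (b2 + x2 t)))) (at t)"
    by (intro DERIV_add DERIV_cmult der1 der2)
  have e: "p * (- lam * (a11 * y1 + a12 * y2) * (b1 + z1)) + q * (- lam * (a21 * y1 + a22 * y2) * (b2 + z2))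
     = - (lam * mu) * (p * y1 + q * y2) + (- lam * (p * z1 * (a11 * y1 + a12 * y2) + q * z2 * (a21 * y1 + a22 * y2)))" for y1 y2 z1 z2
  proof -
    have "p * (- lam * (a11 * y1 + a12 * y2) * (b1 + z1)) + q * (- lam * (a21 * y1 + a22 * y2) * (b2 + z2))
       = - lam * (y1 * (p * (b1 * a11) + q * (b2 * a21)) + y2 * (p * (b1 * a12) + q * (b2 * a22)))
         + (- lam * (p * z1 * (a11 * y1 + a12 * y2) + q * z2 * (a21 * y1 + a22 * y2)))"
      by (simp add: algebra_simps)
    also have "\<dots> = - lam * (y1 * (mu * p) + y2 * (mu * q))
         + (- lam * (p * z1 * (a11 * y1 + a12 * y2) + q * z2 * (a21 * y1 + a22 * y2)))"
      by (simp only: ev)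
    also have "\<dots> = - (lam * mu) * (p * y1 + q * y2) + (- lam * (p * z1 * (a11 * y1 + a12 * y2) + q * z2 * (a21 * y1 + a22 * y2)))"
      by (simp add: algebra_simps)
    finally show ?thesis .
  qed
  show ?thesis using d by (simp only: e)
qed

lemma cont_g:
  fixes x1 x2 :: "real \<Rightarrow> real"
  assumes cx1: "continuous_on UNIV x1" and cx2: "continuous_on UNIV x2"
  shows "continuous_on UNIV (\<lambda>t. - lam * (p * x1 t * (a11 * x1 (t - s) + a12 * x2 (t - s)) + q * x2 t * (a21 * x1 (t - s) + a22 * x2 (t - s))))"
proof -
  have s1: "continuous_on UNIV (\<lambda>t. x1 (t - s))"
    by (rule continuous_on_compose2[OF cx1]) (auto intro!: continuous_intros)
  have s2: "continuous_on UNIV (\<lambda>t. x2 (t - s))"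
    by (rule continuous_on_compose2[OF cx2]) (auto intro!: continuous_intros)
  show ?thesis by (intro continuous_on_mult continuous_on_add continuous_on_minus continuous_on_const s1 s2 cx1 cx2)
qed

lemma shift_sq_integral:
  fixes w :: "real \<Rightarrow> real"
  assumes cw: "continuous_on UNIV w" and pw: "\<And>t. w (t + 2*pi) = w t"
  shows "((\<lambda>t. (w (t - s))^2) has_integral integral {0..2*pi} (\<lambda>t. (w t)^2)) {0..2*pi}"
proof -
  have c2: "continuous_on UNIV (\<lambda>t. (w t)^2)" by (intro continuous_intros cw)
  have I1: "integral {0..2*pi} (\<lambda>t. (w (t + - s))^2) = integral {0..2*pi} (\<lambda>t. (w t)^2)"
    by (rule integral_periodic_shift[OF c2]) (simp add: pw)
  have int: "(\<lambda>t. (w (t + - s))^2) integrable_on {0..2*pi}"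
    by (rule integrable_continuous_interval) (intro continuous_intros cont_shift[OF cw])
  from integrable_integral[OF int] I1 show ?thesis by simp
qed

lemma zero_from_integral:
  fixes w :: "real \<Rightarrow> real"
  assumes cw: "continuous_on UNIV w" and I: "integral {0..2*pi} (\<lambda>t. (w t)^2) = 0" and t: "t \<in> {0..2*pi}"
  shows "w t = 0"
proof -
  have c2: "continuous_on (cbox 0 (2*pi)) (\<lambda>t. (w t)^2)" by (intro continuous_intros cont_sub[OF cw])
  have h0: "((\<lambda>t. (w t)^2) has_integral 0) (cbox 0 (2*pi))"
    using sq_has_integral[OF cw] I by (simp add: cbox_interval)
  have ne: "box 0 (2*pi) \<noteq> {}" using pi_gt_zero by (simp add: box_ne_empty not_le)
  have tt: "t \<in> cbox 0 (2*pi)" using t by (simp add: cbox_interval)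
  have "(w t)^2 = 0"
    by (rule has_integral_0_cbox_imp_0[OF c2 _ h0 ne tt]) simp
  then show ?thesis by simp
qed




lemma vanish:
  fixes x1 x2 :: "real \<Rightarrow> real"
  assumes cx1: "continuous_on UNIV x1" and cx2: "continuous_on UNIV x2"
    and px1: "\<And>t. x1 (t + 2*pi) = x1 t" and px2: "\<And>t. x2 (t + 2*pi) = x2 t"
    and der1: "\<And>t. (x1 has_real_derivative (- lam * (a11 * x1 (t - s) + a12 * x2 (t - s)) * (b1 + x1 t))) (at t)"
    and der2: "\<And>t. (x2 has_real_derivative (- lam * (a21 * x1 (t - s) + a22 * x2 (t - s)) * (b2 + x2 t))) (at t)"
    and ev1: "p1 * (b1 * a11) + q1 * (b2 * a21) = mu1 * p1" "p1 * (b1 * a12) + q1 * (b2 * a22) = mu1 * q1"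
    and ev2: "p2 * (b1 * a11) + q2 * (b2 * a21) = mu2 * p2" "p2 * (b1 * a12) + q2 * (b2 * a22) = mu2 * q2"
    and D: "p1 * q2 - p2 * q1 \<noteq> 0"
    and dpos: "\<delta> > 0"
    and dl1: "\<And>k::int. \<delta> \<le> cmod (\<i> * of_int k + of_real (lam * mu1) * cis (- (of_int k * s)))"
    and dl2: "\<And>k::int. \<delta> \<le> cmod (\<i> * of_int k + of_real (lam * mu2) * cis (- (of_int k * s)))"
    and lam: "lam \<ge> 0"
    and small: "\<And>t. t \<in> {0..2*pi} \<Longrightarrow> \<bar>x1 t\<bar> \<le> \<epsilon> \<and> \<bar>x2 t\<bar> \<le> \<epsilon>"
    and eps: "8 * (\<epsilon> * (lam * (\<bar>p1\<bar> + \<bar>q1\<bar> + \<bar>p2\<bar> + \<bar>q2\<bar>) * (\<bar>a11\<bar> + \<bar>a12\<bar> + \<bar>a21\<bar> + \<bar>a22\<bar>)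
                * (2 * (\<bar>p1\<bar> + \<bar>q1\<bar> + \<bar>p2\<bar> + \<bar>q2\<bar>) / \<bar>p1 * q2 - p2 * q1\<bar>)))^2 \<le> \<delta>^2"
  shows "x1 t = 0 \<and> x2 t = 0"
proof -
  define P where "P = \<bar>p1\<bar> + \<bar>q1\<bar> + \<bar>p2\<bar> + \<bar>q2\<bar>"
  define A where "A = \<bar>a11\<bar> + \<bar>a12\<bar> + \<bar>a21\<bar> + \<bar>a22\<bar>"
  define L where "L = 2 * (\<bar>p1\<bar> + \<bar>q1\<bar> + \<bar>p2\<bar> + \<bar>q2\<bar>) / \<bar>p1 * q2 - p2 * q1\<bar>"
  define K where "K = lam * P * A * L"
  have L0: "L \<ge> 0" by (simp add: L_def)
  have eps': "8 * (\<epsilon> * K)^2 \<le> \<delta>^2" using eps by (simp add: K_def P_def A_def L_def)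
  define w1 where "w1 t = p1 * x1 t + q1 * x2 t" for t
  define w2 where "w2 t = p2 * x1 t + q2 * x2 t" for t
  define g1 where "g1 t = - lam * (p1 * x1 t * (a11 * x1 (t - s) + a12 * x2 (t - s)) + q1 * x2 t * (a21 * x1 (t - s) + a22 * x2 (t - s)))" for t
  define g2 where "g2 t = - lam * (p2 * x1 t * (a11 * x1 (t - s) + a12 * x2 (t - s)) + q2 * x2 t * (a21 * x1 (t - s) + a22 * x2 (t - s)))" for t
  have w1f: "w1 = (\<lambda>t. p1 * x1 t + q1 * x2 t)" by (simp add: w1_def fun_eq_iff)
  have w2f: "w2 = (\<lambda>t. p2 * x1 t + q2 * x2 t)" by (simp add: w2_def fun_eq_iff)
  have g1f: "g1 = (\<lambda>t. - lam * (p1 * x1 t * (a11 * x1 (t - s) + a12 * x2 (t - s)) + q1 * x2 t * (a21 * x1 (t - s) + a22 * x2 (t - s))))"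
    by (simp add: g1_def fun_eq_iff)
  have g2f: "g2 = (\<lambda>t. - lam * (p2 * x1 t * (a11 * x1 (t - s) + a12 * x2 (t - s)) + q2 * x2 t * (a21 * x1 (t - s) + a22 * x2 (t - s))))"
    by (simp add: g2_def fun_eq_iff)
  have cw1: "continuous_on UNIV w1" unfolding w1f by (intro continuous_intros cx1 cx2)
  have cw2: "continuous_on UNIV w2" unfolding w2f by (intro continuous_intros cx1 cx2)
  have cg1: "continuous_on UNIV g1" unfolding g1f by (rule cont_g[OF cx1 cx2])
  have cg2: "continuous_on UNIV g2" unfolding g2f by (rule cont_g[OF cx1 cx2])
  have pw1: "w1 (t + 2*pi) = w1 t" for t by (simp add: w1_def px1 px2)
  have pw2: "w2 (t + 2*pi) = w2 t" for t by (simp add: w2_def px1 px2)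
  have dw1: "(w1 has_real_derivative (- (lam * mu1) * w1 (t - s) + g1 t)) (at t)" for t
    unfolding w1f g1_def using w_deriv[OF der1 der2 ev1, of t] by simp
  have dw2: "(w2 has_real_derivative (- (lam * mu2) * w2 (t - s) + g2 t)) (at t)" for t
    unfolding w2f g2_def using w_deriv[OF der1 der2 ev2, of t] by simp
  define I1 where "I1 = integral {0..2*pi} (\<lambda>t. (w1 t)^2)"
  define I2 where "I2 = integral {0..2*pi} (\<lambda>t. (w2 t)^2)"
  define J1 where "J1 = integral {0..2*pi} (\<lambda>t. (g1 t)^2)"
  define J2 where "J2 = integral {0..2*pi} (\<lambda>t. (g2 t)^2)"
  have k1: "I1 \<le> J1 / \<delta>^2" unfolding I1_def J1_def
    by (rule scalar_key[OF cw1 cg1 pw1 dw1 dpos dl1])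
  have k2: "I2 \<le> J2 / \<delta>^2" unfolding I2_def J2_def
    by (rule scalar_key[OF cw2 cg2 pw2 dw2 dpos dl2])
  have I1nn: "I1 \<ge> 0" unfolding I1_def by (rule has_integral_nonneg[OF sq_has_integral[OF cw1]]) simp
  have I2nn: "I2 \<ge> 0" unfolding I2_def by (rule has_integral_nonneg[OF sq_has_integral[OF cw2]]) simp
  have ptw: "(g t)^2 \<le> 2 * (\<epsilon> * K)^2 * ((w1 (t - s))^2 + (w2 (t - s))^2)"
    if t: "t \<in> {0..2*pi}" and gdef: "g t = - lam * (p * x1 t * (a11 * x1 (t - s) + a12 * x2 (t - s)) + q * x2 t * (a21 * x1 (t - s) + a22 * x2 (t - s)))"
      and pq: "\<bar>p\<bar> + \<bar>q\<bar> \<le> P" for g p q t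
  proof -
    have sm: "\<bar>x1 t\<bar> \<le> \<epsilon>" "\<bar>x2 t\<bar> \<le> \<epsilon>" using small[OF t] by auto
    have e0: "\<epsilon> \<ge> 0" using sm by linarith
    have P0: "P \<ge> 0" by (simp add: P_def)
    have A0: "A \<ge> 0" by (simp add: A_def)
    have yb: "\<bar>x1 (t - s)\<bar> + \<bar>x2 (t - s)\<bar> \<le> L * (\<bar>w1 (t - s)\<bar> + \<bar>w2 (t - s)\<bar>)"
      unfolding L_def w1_def w2_def by (rule ybound[OF D])
    have "\<bar>g t\<bar> \<le> lam * P * \<epsilon> * A * (\<bar>x1 (t - s)\<bar> + \<bar>x2 (t - s)\<bar>)"
      unfolding gdef by (rule gbound[OF sm lam pq A_def])
    also have "\<dots> \<le> lam * P * \<epsilon> * A * (L * (\<bar>w1 (t - s)\<bar> + \<bar>w2 (t - s)\<bar>))"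
      by (rule mult_left_mono[OF yb]) (simp add: lam P0 e0 A0)
    also have "\<dots> = (\<epsilon> * K) * (\<bar>w1 (t - s)\<bar> + \<bar>w2 (t - s)\<bar>)" by (simp add: K_def mult_ac)
    finally have gb: "\<bar>g t\<bar> \<le> (\<epsilon> * K) * (\<bar>w1 (t - s)\<bar> + \<bar>w2 (t - s)\<bar>)" .
    have "(g t)^2 = \<bar>g t\<bar>^2" by simp
    also have "\<dots> \<le> ((\<epsilon> * K) * (\<bar>w1 (t - s)\<bar> + \<bar>w2 (t - s)\<bar>))^2"
      by (rule power_mono[OF gb]) simp
    also have "\<dots> \<le> 2 * (\<epsilon> * K)^2 * ((w1 (t - s))^2 + (w2 (t - s))^2)"
      by (rule sq_sum_le)
    finally show ?thesis .
  qed
  have sh1: "((\<lambda>t. (w1 (t - s))^2) has_integral I1) {0..2*pi}"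
    unfolding I1_def by (rule shift_sq_integral[OF cw1 pw1])
  have sh2: "((\<lambda>t. (w2 (t - s))^2) has_integral I2) {0..2*pi}"
    unfolding I2_def by (rule shift_sq_integral[OF cw2 pw2])
  have hR: "((\<lambda>t. 2 * (\<epsilon> * K)^2 * ((w1 (t - s))^2 + (w2 (t - s))^2)) has_integral (2 * (\<epsilon> * K)^2 * (I1 + I2))) {0..2*pi}"
    by (intro has_integral_mult_right has_integral_add sh1 sh2)
  have j1: "J1 \<le> 2 * (\<epsilon> * K)^2 * (I1 + I2)"
    unfolding J1_def
  proof (rule has_integral_le[OF sq_has_integral[OF cg1] hR])
    fix x :: real assume "x \<in> {0..2*pi}"
    then show "(g1 x)^2 \<le> 2 * (\<epsilon> * K)^2 * ((w1 (x - s))^2 + (w2 (x - s))^2)"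
      by (rule ptw[where p=p1 and q=q1]) (auto simp: g1_def P_def)
  qed
  have j2: "J2 \<le> 2 * (\<epsilon> * K)^2 * (I1 + I2)"
    unfolding J2_def
  proof (rule has_integral_le[OF sq_has_integral[OF cg2] hR])
    fix x :: real assume "x \<in> {0..2*pi}"
    then show "(g2 x)^2 \<le> 2 * (\<epsilon> * K)^2 * ((w1 (x - s))^2 + (w2 (x - s))^2)"
      by (rule ptw[where p=p2 and q=q2]) (auto simp: g2_def P_def)
  qed
  have "I1 + I2 \<le> (J1 + J2) / \<delta>^2" using k1 k2 by (simp add: add_divide_distrib)
  also have "\<dots> \<le> (4 * (\<epsilon> * K)^2 * (I1 + I2)) / \<delta>^2"
    using j1 j2 dpos by (intro divide_right_mono) simp_all
  also have "\<dots> \<le> (\<delta>^2 / 2 * (I1 + I2)) / \<delta>^2"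
    using eps' I1nn I2nn dpos by (intro divide_right_mono mult_right_mono) simp_all
  also have "\<dots> = (I1 + I2) / 2" using dpos by simp
  finally have "I1 + I2 \<le> 0" by simp
  then have I10: "I1 = 0" and I20: "I2 = 0" using I1nn I2nn by simp_all
  have "x1 t = 0 \<and> x2 t = 0" if t: "t \<in> {0..2*pi}" for t
  proof -
    have "w1 t = 0" using zero_from_integral[OF cw1 _ t] I10 by (simp add: I1_def)
    moreover have "w2 t = 0" using zero_from_integral[OF cw2 _ t] I20 by (simp add: I2_def)
    ultimately have "\<bar>x1 t\<bar> + \<bar>x2 t\<bar> \<le> L * 0"
      using ybound[OF D, of "x1 t" "x2 t"] by (simp add: L_def w1_def w2_def)
    then have "\<bar>x1 t\<bar> = 0 \<and> \<bar>x2 t\<bar> = 0" using abs_ge_zero[of "x1 t"] abs_ge_zero[of "x2 t"] by linarith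
    then show ?thesis by simp
  qed
  moreover obtain t1 where "t1 \<in> {0..<2*pi}" "x1 t = x1 t1" using periodic_reduce[of x1 t, OF px1] by blast
  moreover obtain t2 where "t2 \<in> {0..<2*pi}" "x2 t = x2 t2" using periodic_reduce[of x2 t, OF px2] by blast
  ultimately show ?thesis by auto
qed


lemma delta_exists:
  fixes mu tau l1 l2 :: real
  assumes mu: "mu > 0" and tau: "tau > 0" and l1: "0 < l1"
    and nres: "sin (mu * tau) \<noteq> 1"
  shows "\<exists>\<delta>>0. \<forall>lam\<in>{l1..l2}. \<forall>k::int. \<delta> \<le> cmod (\<i> * of_int k + of_real (lam * mu) * cis (- (of_int k * (tau / lam))))"
proof -
  define \<phi> where "\<phi> k lam = cmod (\<i> * of_int k + of_real (lam * mu) * cis (- (of_int k * (tau / lam))))" for k :: int and lam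
  have nz: "\<phi> k lam > 0" if lam: "lam > 0" for k lam
  proof (rule ccontr)
    assume "\<not> \<phi> k lam > 0"
    then have z: "\<i> * of_int k + of_real (lam * mu) * cis (- (of_int k * (tau / lam))) = 0"
      by (simp add: \<phi>_def)
    define \<theta> where "\<theta> = of_int k * (tau / lam)"
    define a where "a = lam * mu"
    have a0: "a > 0" using lam mu by (simp add: a_def)
    have "Re (\<i> * of_int k + of_real a * cis (- \<theta>)) = 0" using z by (simp add: a_def \<theta>_def)
    then have c: "cos \<theta> = 0" using a0 by simp
    have "Im (\<i> * of_int k + of_real a * cis (- \<theta>)) = 0" using z by (simp add: a_def \<theta>_def)
    then have k: "of_int k = a * sin \<theta>" by simp
    have "(sin \<theta>)^2 = 1" using c sin_cos_squared_add[of \<theta>] by simp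
    then have "sin \<theta> = 1 \<or> sin \<theta> = -1" by (simp add: power2_eq_1_iff)
    then show False
    proof
      assume s: "sin \<theta> = 1"
      then have "of_int k = a" using k by simp
      then have "\<theta> = mu * tau" using lam by (simp add: \<theta>_def a_def field_simps)
      then show False using s nres by simp
    next
      assume s: "sin \<theta> = -1"
      then have "of_int k = - a" using k by simp
      then have "\<theta> = - (mu * tau)" using lam by (simp add: \<theta>_def a_def field_simps)
      then show False using s nres by simp
    qed
  qed
  have large: "\<phi> k lam \<ge> 1" if lam: "lam \<in> {l1..l2}" and k: "\<bar>of_int k\<bar> \<ge> l2 * mu + 1" for k lam
  proof -
    define Z where "Z = of_real (lam * mu) * cis (- (of_int k * (tau / lam)))"
    have nZ: "cmod Z = lam * mu" using lam l1 mu by (simp add: Z_def norm_mult)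
    have "cmod (\<i> * of_int k) \<le> cmod (\<i> * of_int k + Z) + cmod Z"
      using norm_triangle_ineq4[of "\<i> * of_int k + Z" Z] by simp
    moreover have "cmod (\<i> * of_int k) = \<bar>of_int k\<bar>" by (simp add: norm_mult)
    moreover have "lam * mu \<le> l2 * mu" using lam mu by (simp add: mult_right_mono)
    ultimately show ?thesis using k nZ by (simp add: \<phi>_def Z_def)
  qed
  have each: "\<exists>m>0. \<forall>lam\<in>{l1..l2}. m \<le> \<phi> k lam" for k
  proof (cases "l1 \<le> l2")
    case False then show ?thesis by (intro exI[of _ 1]) auto
  next
    case True
    have "continuous_on {l1..l2} (\<phi> k)"
      unfolding \<phi>_def[abs_def] cis_conv_exp using l1
      by (intro continuous_intros) auto
    then obtain l0 where l0: "l0 \<in> {l1..l2}" "\<forall>lam\<in>{l1..l2}. \<phi> k l0 \<le> \<phi> k lam"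
      using continuous_attains_inf[of "{l1..l2}" "\<phi> k"] True by auto
    have "\<phi> k l0 > 0" using l0(1) l1 by (intro nz) auto
    then show ?thesis using l0(2) by blast
  qed
  then obtain dk where dk: "\<And>k. dk k > 0" "\<And>k lam. lam \<in> {l1..l2} \<Longrightarrow> dk k \<le> \<phi> k lam"
    by metis
  define N where "N = nat (ceiling (l2 * mu + 1))"
  define Kf where "Kf = {- int N..int N}"
  define \<delta> where "\<delta> = Min (insert 1 (dk ` Kf))"
  have fin: "finite (insert 1 (dk ` Kf))" by (simp add: Kf_def)
  have dpos: "\<delta> > 0" unfolding \<delta>_def using fin dk(1) by (auto simp: Min_gr_iff)
  have d1: "\<delta> \<le> 1" unfolding \<delta>_def using fin by simp
  have dK: "\<delta> \<le> dk k" if "k \<in> Kf" for k unfolding \<delta>_def using fin that by simp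
  have "\<delta> \<le> \<phi> k lam" if lam: "lam \<in> {l1..l2}" for k lam
  proof (cases "k \<in> Kf")
    case True then show ?thesis using dK dk(2)[OF lam] order_trans by blast
  next
    case False
    then have "\<bar>k\<bar> > int N" by (auto simp: Kf_def)
    then have "\<bar>of_int k\<bar> \<ge> l2 * mu + 1" unfolding N_def by linarith
    then have "\<phi> k lam \<ge> 1" by (rule large[OF lam])
    then show ?thesis using d1 by linarith
  qed
  then show ?thesis using dpos unfolding \<phi>_def by blast
qed


lemma sup_bound:
  assumes x: "x \<in> E_hat" and m: "Ehat_norm x \<le> m" and m0: "m > 0"
  shows "\<bar>x t\<bar> \<le> m * (1 + 2*pi)"
proof -
  have cx: "continuous_on UNIV x" and px: "\<And>t. x (t + 2*pi) = x t"
    and ex: "\<exists>y. weak_deriv_L2 x y" and ix: "integral {0..2*pi} x = 0"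
    using x unfolding E_hat_def by auto
  define Y where "Y = (SOME y. weak_deriv_L2 x y)"
  have wd: "weak_deriv_L2 x Y" unfolding Y_def using ex by (rule someI_ex)
  have Yi: "Y integrable_on {0..2*pi}" and Y2i: "(\<lambda>t. (Y t)^2) integrable_on {0..2*pi}"
    and xY: "\<And>t. t \<in> {0..2*pi} \<Longrightarrow> x t = x 0 + integral {0..t} Y"
    using wd unfolding weak_deriv_L2_def by blast+
  define N where "N = integral {0..2*pi} (\<lambda>t. (Y t)^2)"
  have x2: "((\<lambda>t. (x t)^2) has_integral integral {0..2*pi} (\<lambda>t. (x t)^2)) {0..2*pi}"
    by (rule sq_has_integral[OF cx])
  have x2nn: "integral {0..2*pi} (\<lambda>t. (x t)^2) \<ge> 0" by (rule has_integral_nonneg[OF x2]) simp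
  have sumI: "((\<lambda>t. (Y t)^2 + (x t)^2) has_integral (N + integral {0..2*pi} (\<lambda>t. (x t)^2))) {0..2*pi}"
    unfolding N_def by (intro has_integral_add integrable_integral Y2i x2)
  have "Ehat_norm x = sqrt (N + integral {0..2*pi} (\<lambda>t. (x t)^2))"
    unfolding Ehat_norm_def Y_def[symmetric] using sumI by (simp add: integral_unique)
  then have "N + integral {0..2*pi} (\<lambda>t. (x t)^2) \<le> m^2" using m by (metis sqrt_le_D)
  then have Nm: "N \<le> m^2" using x2nn by linarith
  have osc1: "\<bar>x b - x a\<bar> \<le> m * (1 + 2*pi) / 2" if ab: "0 \<le> a" "a \<le> b" "b \<le> 2*pi" for a b
  proof -
    have sub: "{a..b} \<subseteq> {0..2*pi}" using ab by auto
    have Yab: "Y integrable_on {a..b}" by (rule integrable_on_subinterval[OF Yi sub])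
    have Y2ab: "(\<lambda>t. (Y t)^2) integrable_on {a..b}" by (rule integrable_on_subinterval[OF Y2i sub])
    have Y0b: "Y integrable_on {0..b}" by (rule integrable_on_subinterval[OF Yi]) (use ab in auto)
    have "integral {0..a} Y + integral {a..b} Y = integral {0..b} Y"
      by (rule Henstock_Kurzweil_Integration.integral_combine[OF ab(1) ab(2) Y0b])
    moreover have "x b = x 0 + integral {0..b} Y" by (rule xY) (use ab in auto)
    moreover have "x a = x 0 + integral {0..a} Y" by (rule xY) (use ab in auto)
    ultimately have dif: "x b - x a = integral {a..b} Y" by simp
    have hq: "((\<lambda>t. (Y t)^2 + m^2) has_integral (integral {a..b} (\<lambda>t. (Y t)^2) + (b - a) * m^2)) {a..b}"
      using has_integral_add[OF integrable_integral[OF Y2ab] has_integral_const_real[of "m^2" a b]] ab by simp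
    have hY: "((\<lambda>t. 2 * m * Y t) has_integral (2 * m * integral {a..b} Y)) {a..b}"
      by (intro has_integral_mult_right integrable_integral Yab)
    have hY': "((\<lambda>t. - (2 * m * Y t)) has_integral (- (2 * m * integral {a..b} Y))) {a..b}"
      by (intro has_integral_neg hY)
    have up: "2 * m * integral {a..b} Y \<le> integral {a..b} (\<lambda>t. (Y t)^2) + (b - a) * m^2"
    proof (rule has_integral_le[OF hY hq])
      fix t show "2 * m * Y t \<le> (Y t)^2 + m^2" using sum_squares_ge_zero[of "Y t - m" 0]
        by (simp add: power2_eq_square algebra_simps)
    qed
    have lo: "- (2 * m * integral {a..b} Y) \<le> integral {a..b} (\<lambda>t. (Y t)^2) + (b - a) * m^2"
    proof (rule has_integral_le[OF hY' hq])
      fix t show "- (2 * m * Y t) \<le> (Y t)^2 + m^2" using sum_squares_ge_zero[of "Y t + m" 0]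
        by (simp add: power2_eq_square algebra_simps)
    qed
    have "integral {a..b} (\<lambda>t. (Y t)^2) \<le> N"
      unfolding N_def by (rule integral_subset_le[OF sub Y2ab Y2i]) simp
    moreover have "(b - a) * m^2 \<le> 2*pi * m^2" using ab by (intro mult_right_mono) auto
    ultimately have "2 * m * \<bar>integral {a..b} Y\<bar> \<le> m^2 + 2*pi * m^2"
      using up lo Nm by (simp add: abs_if)
    then have "2 * m * \<bar>integral {a..b} Y\<bar> \<le> 2 * m * (m * (1 + 2*pi) / 2)"
      by (simp add: power2_eq_square algebra_simps)
    then have "\<bar>integral {a..b} Y\<bar> \<le> m * (1 + 2*pi) / 2"
      using m0 by (simp add: mult_le_cancel_left_pos)
    then show ?thesis using dif by simp
  qed
  have osc: "\<bar>x t - x u\<bar> \<le> m * (1 + 2*pi) / 2" if "t \<in> {0..2*pi}" "u \<in> {0..2*pi}" for t u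
  proof (cases "u \<le> t")
    case True then show ?thesis using osc1[of u t] that by auto
  next
    case False then show ?thesis using osc1[of t u] that by (simp add: abs_minus_commute)
  qed
  define B where "B = m * (1 + 2*pi) / 2"
  have inner: "\<bar>x t\<bar> \<le> B" if t: "t \<in> {0..2*pi}" for t
  proof -
    have "x integrable_on {0..2*pi}" by (rule integrable_continuous_interval[OF cont_sub[OF cx]])
    from integrable_integral[OF this] ix have xi: "(x has_integral 0) {0..2*pi}" by simp
    have hd: "((\<lambda>u. x t - x u) has_integral (2*pi * x t)) {0..2*pi}"
      using has_integral_diff[OF has_integral_const_real[of "x t" 0 "2*pi"] xi] by simp
    have ob: "x t - x u \<le> B \<and> - B \<le> x t - x u" if u: "u \<in> {0..2*pi}" for u
    proof -
      have "\<bar>x t - x u\<bar> \<le> B" using osc[OF t u] by (simp add: B_def)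
      then show ?thesis by (simp add: abs_le_iff)
    qed
    have hB: "((\<lambda>u. B) has_integral (2*pi*B)) {0..2*pi}" using has_integral_const_real[of B 0 "2*pi"] by simp
    have hmB: "((\<lambda>u. - B) has_integral (2*pi*(-B))) {0..2*pi}" using has_integral_const_real[of "-B" 0 "2*pi"] by simp
    have up: "2*pi * x t \<le> 2*pi * B"
      by (rule has_integral_le[OF hd hB]) (use ob in blast)
    have lo: "2*pi*(-B) \<le> 2*pi * x t"
      by (rule has_integral_le[OF hmB hd]) (use ob in blast)
    have "x t \<le> B" by (rule mult_left_le_imp_le[OF up]) simp
    moreover have "-B \<le> x t" by (rule mult_left_le_imp_le[OF lo]) simp
    ultimately show ?thesis by (simp add: abs_le_iff)
  qed
  obtain t0 where "t0 \<in> {0..<2*pi}" "x t = x t0" using periodic_reduce[of x t, OF px] by blast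
  then have "\<bar>x t\<bar> \<le> B" using inner by auto
  also have "B \<le> m * (1 + 2*pi)" using m0 by (simp add: B_def)
  finally show ?thesis .
qed



lemma char_of_eig:
  assumes "eigenvalue2 m11 m12 m21 m22 \<mu>"
  shows "(m11 - \<mu>) * (m22 - \<mu>) - m12 * m21 = 0"
proof -
  obtain v1 v2 where v: "(v1, v2) \<noteq> (0, 0)" "m11 * v1 + m12 * v2 = \<mu> * v1" "m21 * v1 + m22 * v2 = \<mu> * v2"
    using assms unfolding eigenvalue2_def by blast
  define d where "d = (m11 - \<mu>) * (m22 - \<mu>) - m12 * m21"
  have e1: "(m11 - \<mu>) * v1 + m12 * v2 = 0" using v(2) by (simp add: algebra_simps)
  have e2: "m21 * v1 + (m22 - \<mu>) * v2 = 0" using v(3) by (simp add: algebra_simps)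
  have "d * v1 = (m22 - \<mu>) * ((m11 - \<mu>) * v1 + m12 * v2) - m12 * (m21 * v1 + (m22 - \<mu>) * v2)"
    unfolding d_def by (simp add: algebra_simps)
  then have d1: "d * v1 = 0" using e1 e2 by simp
  have "d * v2 = (m11 - \<mu>) * (m21 * v1 + (m22 - \<mu>) * v2) - m21 * ((m11 - \<mu>) * v1 + m12 * v2)"
    unfolding d_def by (simp add: algebra_simps)
  then have d2: "d * v2 = 0" using e1 e2 by simp
  show ?thesis using d1 d2 v(1) unfolding d_def[symmetric] by auto
qed

lemma left_eig:
  fixes m11 m12 m21 m22 \<mu> :: real
  assumes "(m11 - \<mu>) * (m22 - \<mu>) - m12 * m21 = 0"
  shows "m21 * m11 + (\<mu> - m11) * m21 = \<mu> * m21" "m21 * m12 + (\<mu> - m11) * m22 = \<mu> * (\<mu> - m11)"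
proof -
  show "m21 * m11 + (\<mu> - m11) * m21 = \<mu> * m21" by (simp add: algebra_simps)
  have "m21 * m12 + (\<mu> - m11) * m22 - \<mu> * (\<mu> - m11) = - ((m11 - \<mu>) * (m22 - \<mu>) - m12 * m21)"
    by (simp add: algebra_simps)
  then show "m21 * m12 + (\<mu> - m11) * m22 = \<mu> * (\<mu> - m11)" using assms by simp
qed

lemma nres:
  fixes n :: nat
  assumes "pi/2 + 2 * real n * pi < x" "x < pi/2 + 2 * (real n + 1) * pi"
  shows "sin x \<noteq> 1"
proof
  assume "sin x = 1"
  then obtain j :: int where j: "x = (2 * of_int j + 1/2) * pi" using sin_eq_1 by blast
  have "(2 * real n) * pi < (2 * of_int j) * pi" using assms(1) j by (simp add: algebra_simps)
  then have "real n < of_int j" by simp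
  then have "of_int (int n) < (of_int j :: real)" by simp
  then have a: "int n < j" by (simp only: of_int_less_iff)
  have "(2 * of_int j) * pi < (2 * (real n + 1)) * pi" using assms(2) j by (simp add: algebra_simps)
  then have "of_int j < real n + 1" by simp
  then have "(of_int j :: real) < of_int (int n + 1)" by simp
  then have b: "j < int n + 1" by (simp only: of_int_less_iff)
  from a b show False by linarith
qed

lemma mu_neq:
  fixes n1 n2 :: nat
  assumes "n1 \<noteq> n2" "pi/2 + 2 * real n1 * pi < x1" "x1 < pi/2 + 2 * (real n1 + 1) * pi"
    "pi/2 + 2 * real n2 * pi < x2" "x2 < pi/2 + 2 * (real n2 + 1) * pi"
  shows "x1 \<noteq> x2"
proof
  assume e: "x1 = x2"
  have "(2 * real n1) * pi < (2 * (real n2 + 1)) * pi" using assms(2,5) e by linarith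
  then have "real n1 < real n2 + 1" by simp
  moreover have "(2 * real n2) * pi < (2 * (real n1 + 1)) * pi" using assms(3,4) e by linarith
  then have "real n2 < real n1 + 1" by simp
  ultimately show False using assms(1) by linarith
qed



theorem lemma4p1:
  fixes r1 r2 a11 a12 a21 a22 b1 b2 \<mu>1 \<mu>2 \<tau> lam1 lam2 :: real and n1 n2 :: nat
  assumes pos_A: "a11 > 0" "a12 > 0" "a21 > 0" "a22 > 0"
    and inv_A: "a11 * a22 - a12 * a21 \<noteq> 0"
    and b_def: "a11 * b1 + a12 * b2 = r1" "a21 * b1 + a22 * b2 = r2"
    and pos_b: "b1 > 0" "b2 > 0"
    and posdef: "\<And>y1 y2. (y1, y2) \<noteq> (0, 0) \<Longrightarrow>
                   (a11 * y1 + a12 * y2) * y1 + (a21 * y1 + a22 * y2) * y2 > 0"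
    and eig: "eigenvalue2 (b1 * a11) (b1 * a12) (b2 * a21) (b2 * a22) \<mu>1"
             "eigenvalue2 (b1 * a11) (b1 * a12) (b2 * a21) (b2 * a22) \<mu>2"
    and pos_mu: "\<mu>1 > 0" "\<mu>2 > 0"
    and tau_pos: "\<tau> > 0"
    and tau_min: "min (2*pi/\<mu>1) (2*pi/\<mu>2) < \<tau>"
    and n_neq: "n1 \<noteq> n2"
    and n1_bd: "pi/2 + 2 * real n1 * pi < \<mu>1 * \<tau>" "\<mu>1 * \<tau> < pi/2 + 2 * (real n1 + 1) * pi"
    and n2_bd: "pi/2 + 2 * real n2 * pi < \<mu>2 * \<tau>" "\<mu>2 * \<tau> < pi/2 + 2 * (real n2 + 1) * pi"
    and lam: "0 < lam1" "lam1 < lam2"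
  shows "\<exists>m1 > 0. \<forall>x1 x2 lam.
           (x1, x2) \<in> Theta0 b1 b2 \<and> lam \<in> {lam1..lam2} \<and>
           is_solution_P a11 a12 a21 a22 b1 b2 \<tau> x1 x2 lam \<and>
           \<not> (x1 = (\<lambda>t. 0) \<and> x2 = (\<lambda>t. 0))
           \<longrightarrow> \<not> (Ehat_norm x1 \<le> m1 \<and> Ehat_norm x2 \<le> m1)"
proof -
  have ch1: "(b1 * a11 - \<mu>1) * (b2 * a22 - \<mu>1) - (b1 * a12) * (b2 * a21) = 0" by (rule char_of_eig[OF eig(1)])
  have ch2: "(b1 * a11 - \<mu>2) * (b2 * a22 - \<mu>2) - (b1 * a12) * (b2 * a21) = 0" by (rule char_of_eig[OF eig(2)])
  define p1 where "p1 = b2 * a21"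
  define q1 where "q1 = \<mu>1 - b1 * a11"
  define p2 where "p2 = b2 * a21"
  define q2 where "q2 = \<mu>2 - b1 * a11"
  have ev1: "p1 * (b1 * a11) + q1 * (b2 * a21) = \<mu>1 * p1" "p1 * (b1 * a12) + q1 * (b2 * a22) = \<mu>1 * q1"
    using left_eig[OF ch1] by (simp_all add: p1_def q1_def)
  have ev2: "p2 * (b1 * a11) + q2 * (b2 * a21) = \<mu>2 * p2" "p2 * (b1 * a12) + q2 * (b2 * a22) = \<mu>2 * q2"
    using left_eig[OF ch2] by (simp_all add: p2_def q2_def)
  have "\<mu>1 * \<tau> \<noteq> \<mu>2 * \<tau>" by (rule mu_neq[OF n_neq n1_bd n2_bd])
  then have mne: "\<mu>1 \<noteq> \<mu>2" by auto
  have "p1 * q2 - p2 * q1 = (b2 * a21) * (\<mu>2 - \<mu>1)" by (simp add: p1_def p2_def q1_def q2_def algebra_simps)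
  moreover have "b2 * a21 > 0" using pos_b pos_A by simp
  ultimately have D: "p1 * q2 - p2 * q1 \<noteq> 0" using mne pos_b pos_A by simp
  obtain \<delta>1 where d1: "\<delta>1 > 0" "\<forall>lam\<in>{lam1..lam2}. \<forall>k::int. \<delta>1 \<le> cmod (\<i> * of_int k + of_real (lam * \<mu>1) * cis (- (of_int k * (\<tau> / lam))))"
    using delta_exists[OF pos_mu(1) tau_pos lam(1) nres[OF n1_bd], of lam2] by blast
  obtain \<delta>2 where d2: "\<delta>2 > 0" "\<forall>lam\<in>{lam1..lam2}. \<forall>k::int. \<delta>2 \<le> cmod (\<i> * of_int k + of_real (lam * \<mu>2) * cis (- (of_int k * (\<tau> / lam))))"
    using delta_exists[OF pos_mu(2) tau_pos lam(1) nres[OF n2_bd], of lam2] by blast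
  define \<delta> where "\<delta> = min \<delta>1 \<delta>2"
  have dpos: "\<delta> > 0" using d1 d2 by (simp add: \<delta>_def)
  define P where "P = \<bar>p1\<bar> + \<bar>q1\<bar> + \<bar>p2\<bar> + \<bar>q2\<bar>"
  define A where "A = \<bar>a11\<bar> + \<bar>a12\<bar> + \<bar>a21\<bar> + \<bar>a22\<bar>"
  define L where "L = 2 * (\<bar>p1\<bar> + \<bar>q1\<bar> + \<bar>p2\<bar> + \<bar>q2\<bar>) / \<bar>p1 * q2 - p2 * q1\<bar>"
  define K2 where "K2 = lam2 * P * A * L"
  define \<epsilon> where "\<epsilon> = \<delta> / (3 * K2 + 1)"
  define m1 where "m1 = \<epsilon> / (1 + 2*pi)"
  have PAL: "P * A * L \<ge> 0" by (simp add: P_def A_def L_def)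
  have K20: "K2 \<ge> 0" using lam PAL by (simp add: K2_def mult.assoc)
  have e0: "\<epsilon> > 0" using dpos K20 by (simp add: \<epsilon>_def)
  have m10: "m1 > 0" using e0 by (simp add: m1_def pos_add_strict)
  have eK: "\<epsilon> * K2 \<le> \<delta> / 3"
  proof -
    have "\<epsilon> * K2 = \<delta> * K2 / (3 * K2 + 1)" by (simp add: \<epsilon>_def)
    also have "\<dots> \<le> \<delta> / 3" using dpos K20 by (simp add: field_simps)
    finally show ?thesis .
  qed
  have epsc: "8 * (\<epsilon> * (lam * P * A * L))^2 \<le> \<delta>^2" if lm: "lam \<in> {lam1..lam2}" for lam
  proof -
    have l0: "lam \<ge> 0" using lm lam by auto
    have "lam * P * A * L \<le> K2" unfolding K2_def using lm PAL
      by (simp add: mult.assoc mult_right_mono)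
    then have X: "\<epsilon> * (lam * P * A * L) \<le> \<delta> / 3"
      using eK e0 by (meson mult_left_mono less_imp_le order_trans)
    have X0: "0 \<le> \<epsilon> * (lam * P * A * L)" using e0 l0 PAL by (simp add: mult.assoc)
    have "(\<epsilon> * (lam * P * A * L))^2 \<le> (\<delta> / 3)^2" by (rule power_mono[OF X X0])
    then have "(\<epsilon> * (lam * P * A * L))^2 * 9 \<le> \<delta>^2" using dpos by (simp add: power_divide)
    then show ?thesis using zero_le_power2[of "\<epsilon> * (lam * P * A * L)"] by linarith
  qed
  show ?thesis
  proof (intro exI[of _ m1] conjI allI impI)
    show "m1 > 0" by (rule m10)
  next
    fix x1 x2 lam
    assume H: "(x1, x2) \<in> Theta0 b1 b2 \<and> lam \<in> {lam1..lam2} \<and>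
           is_solution_P a11 a12 a21 a22 b1 b2 \<tau> x1 x2 lam \<and> \<not> (x1 = (\<lambda>t. 0) \<and> x2 = (\<lambda>t. 0))"
    then have lm: "lam \<in> {lam1..lam2}" and sol: "is_solution_P a11 a12 a21 a22 b1 b2 \<tau> x1 x2 lam"
      and nt: "\<not> (x1 = (\<lambda>t. 0) \<and> x2 = (\<lambda>t. 0))" by auto
    have E1: "x1 \<in> E_hat" and E2: "x2 \<in> E_hat" and lpos: "lam > 0"
      and der1: "\<And>t. (x1 has_real_derivative (- lam * (a11 * x1 (t - \<tau>/lam) + a12 * x2 (t - \<tau>/lam)) * (b1 + x1 t))) (at t)"
      and der2: "\<And>t. (x2 has_real_derivative (- lam * (a21 * x1 (t - \<tau>/lam) + a22 * x2 (t - \<tau>/lam)) * (b2 + x2 t))) (at t)"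
      using sol unfolding is_solution_P_def by blast+
    have cx1: "continuous_on UNIV x1" and px1: "\<And>t. x1 (t + 2*pi) = x1 t" using E1 unfolding E_hat_def by auto
    have cx2: "continuous_on UNIV x2" and px2: "\<And>t. x2 (t + 2*pi) = x2 t" using E2 unfolding E_hat_def by auto
    show "\<not> (Ehat_norm x1 \<le> m1 \<and> Ehat_norm x2 \<le> m1)"
    proof
      assume nm: "Ehat_norm x1 \<le> m1 \<and> Ehat_norm x2 \<le> m1"
      have "1 + 2*pi > 0" using pi_gt_zero by linarith
      then have me: "m1 * (1 + 2*pi) = \<epsilon>" by (simp add: m1_def)
      have small: "\<bar>x1 t\<bar> \<le> \<epsilon> \<and> \<bar>x2 t\<bar> \<le> \<epsilon>" if "t \<in> {0..2*pi}" for t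
        using sup_bound[OF E1 _ m10, of t] sup_bound[OF E2 _ m10, of t] nm me by simp
      have dl1: "\<delta> \<le> cmod (\<i> * of_int k + of_real (lam * \<mu>1) * cis (- (of_int k * (\<tau> / lam))))" for k :: int
        using d1(2) lm by (simp add: \<delta>_def min.coboundedI1)
      have dl2: "\<delta> \<le> cmod (\<i> * of_int k + of_real (lam * \<mu>2) * cis (- (of_int k * (\<tau> / lam))))" for k :: int
        using d2(2) lm by (simp add: \<delta>_def min.coboundedI2)
      have z: "x1 t = 0 \<and> x2 t = 0" for t
        by (rule vanish[OF cx1 cx2 px1 px2 der1 der2 ev1 ev2 D dpos dl1 dl2 _ small epsc[OF lm, unfolded P_def A_def L_def]])
           (use lpos in auto)
      then have "x1 = (\<lambda>t. 0) \<and> x2 = (\<lambda>t. 0)" by (simp add: fun_eq_iff)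
      then show False using nt by simp
    qed
  qed
qed


end
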